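(* Let $r\ge2$ be an integer not divisible by $4$, $K\subset S^3$ an oriented zero-framed knot, and $M=S^3_0(K)$. For $\alpha\in\mathbb C\setminus\mathbb Z$ let $\omega_\alpha\in H^1(M;\mathbb C/2\mathbb Z)$ be the class whose value on the positive meridian of $K$ is $\alpha\bmod 2$. If $r$ is odd, then $$\lim_{\alpha\to0}[r\alpha]^2\,\mathrm N_r(M,\omega_\alpha)=D^2\,\mathrm{WRT}_r(M).$$ If $r$ is even, then $$\lim_{\alpha\to0}[r\alpha]^2\,\mathrm N_r(M,\omega_\alpha)=2D^2\,\mathrm{WRT}_r(M,\omega_0),\qquad \lim_{\alpha\to1}[r\alpha]^2\,\mathrm N_r(M,\omega_\alpha)=2D^2\,\mathrm{WRT}_r(M,\omega_1),$$ where $\omega_i\in H^1(M;\mathbb Z/2\mathbb Z)$ is the class whose value on the meridian of $K$ is $i\in\{0,1\}$.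
   Context: Notation: $\xi=e^{\pi i/r}$, $\xi^z:=e^{\pi iz/r}$, $\{z\}:=\xi^z-\xi^{-z}$, $[z]:=\{z\}/\{1\}$, $H_r:=\{-(r-1),-(r-3),\dots,r-3,r-1\}$, $D:=\sqrt{r/2}\,(\sin(\pi/r))^{-1}$. Let $U=U^H_\xi(\mathfrak{sl}_2)$ be generated by $E,F,H,K^{\pm1}$ with $KEK^{-1}=\xi^2E$, $KFK^{-1}=\xi^{-2}F$, $[E,F]=\frac{K-K^{-1}}{\xi-\xi^{-1}}$, $HK=KH$, $[H,E]=2E$, $[H,F]=-2F$, coproduct $\Delta E=1\otimes E+E\otimes K$, $\Delta F=K^{-1}\otimes F+F\otimes1$, $\Delta K=K\otimes K$, $\Delta H=H\otimes1+1\otimes H$, antipode $S(E)=-EK^{-1}$, $S(F)=-KF$, $S(K)=K^{-1}$, $S(H)=-H$. Let $\mathcal C$ be the category of finite-dimensional $U$-modules with $H$ diagonalizable, $K=\xi^H$, $E^r=F^r=0$, made ribbon by the braiding $\tau\circ R$, $R=\xi^{H\otimes H/2}\sum_{n=0}^{r-1}\frac{\{1\}^{2n}}{\{n\}!}\xi^{n(n-1)/2}E^n\otimes F^n$ ($\{n\}!=\{1\}\cdots\{n\}$), twist the action of $\theta^{-1}$, $\theta=K^{r-1}\sum_{n=0}^{r-1}\frac{\{1\}^{2n}}{\{n\}!}\xi^{n(n-1)/2}S(F^n)\xi^{-H^2/2}E^n$, standard left duality and right duality $1\mapsto\sum_iv_i^*\otimes K^{r-1}v_i$, $v\otimes f\mapsto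 f(K^{1-r}v)$; let $\mathcal F$ be its Reshetikhin–Turaev functor. Modules: $S_n$ ($0\le n\le r-1$) has basis $s_0,\dots,s_n$ with $Hs_i=(n-2i)s_i$, $Fs_i=s_{i+1}$, $Es_0=0$, $Es_i=\frac{\{i\}\{n+1-i\}}{\{1\}^2}s_{i-1}$; for $\alpha\in\mathbb C$, $V_\alpha$ is $r$-dimensional with basis $v_0,\dots,v_{r-1}$, $Hv_i=(\alpha+r-1-2i)v_i$, $Ev_i=\frac{\{i\}\{i-\alpha\}}{\{1\}^2}v_{i-1}$, $Fv_i=v_{i+1}$ ($Fv_{r-1}=0$). Present $K$ as the closure of a $(1,1)$-tangle $T$; for $V\in\{S_n,V_\alpha\}$ let $T(V)\in\mathbb C$ be defined by $\mathcal F(T)=T(V)\,\mathrm{Id}_V$. For $\alpha\notin\mathbb Z$ the CGP invariant of $(M,\omega_\alpha)$ is given by $[r\alpha]^2\,\mathrm N_r(M,\omega_\alpha)=\sum_{k\in H_r}\frac{\{\alpha+k\}^2}{\{1\}^2}T(V_{\alpha+k})$. The WRT invariants are $\mathrm{WRT}_r(M)=D^{-2}\sum_{j=0}^{r-2}\frac{\{j+1\}^2}{\{1\}^2}T(S_j)$ and, for $i\in\{0,1\}$, $\mathrm{WRT}_r(M,\omega_i)=D^{-2}\sum_{0\le j\le r-2,\ j\equiv i\ (2)}\frac{\{j+1\}^2}{\{1\}^2}T(S_j)$. *)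

theory Defs
  imports Complex_Main
begin

text \<open>xi r z = e^(pi i z / r), curly r z = {z}, qnum r z = [z].\<close>

definition xi :: "nat \<Rightarrow> complex \<Rightarrow> complex" where
  "xi r z = exp (complex_of_real pi * \<i> * z / of_nat r)"

definition curly :: "nat \<Rightarrow> complex \<Rightarrow> complex" where
  "curly r z = xi r z - xi r (- z)"

definition qnum :: "nat \<Rightarrow> complex \<Rightarrow> complex" where
  "qnum r z = curly r z / curly r 1"

definition qfact :: "nat \<Rightarrow> nat \<Rightarrow> complex" where
  "qfact r n = (\<Prod>k=1..n. curly r (of_nat k))"

definition Dconst :: "nat \<Rightarrow> real" where
  "Dconst r = sqrt (real r / 2) / sin (pi / real r)"

text \<open>A module of the relevant shape is encoded as (d, h, e): basis b_0..b_(d-1),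
  H b_i = h i * b_i, E b_i = e i * b_(i-1) (E b_0 = 0), F b_i = b_(i+1) (F b_(d-1) = 0).\<close>

type_synonym wmod = "nat \<times> (nat \<Rightarrow> complex) \<times> (nat \<Rightarrow> complex)"

definition Smod :: "nat \<Rightarrow> nat \<Rightarrow> wmod" where
  "Smod r n = (n + 1, \<lambda>i. of_nat n - 2 * of_nat i,
      \<lambda>i. curly r (of_nat i) * curly r (of_nat n + 1 - of_nat i) / (curly r 1)^2)"

definition Vmod :: "nat \<Rightarrow> complex \<Rightarrow> wmod" where
  "Vmod r \<alpha> = (r, \<lambda>i. \<alpha> + of_nat r - 1 - 2 * of_nat i,
      \<lambda>i. curly r (of_nat i) * curly r (of_nat i - \<alpha>) / (curly r 1)^2)"

definition mdim :: "wmod \<Rightarrow> nat" where "mdim M = fst M"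
definition mwt :: "wmod \<Rightarrow> nat \<Rightarrow> complex" where "mwt M = fst (snd M)"
definition mE :: "wmod \<Rightarrow> nat \<Rightarrow> complex" where "mE M = snd (snd M)"

text \<open>Coefficient of b_(i-n) in E^n b_i.\<close>
definition Epow :: "wmod \<Rightarrow> nat \<Rightarrow> nat \<Rightarrow> complex" where
  "Epow M n i = (if n \<le> i then (\<Prod>k<n. mE M (i - k)) else 0)"

definition Rcoef :: "nat \<Rightarrow> nat \<Rightarrow> complex" where
  "Rcoef r n = (curly r 1)^(2*n) / qfact r n * xi r (of_nat (n * (n - 1)) / 2)"

text \<open>Braiding c = tau o R on M (x) M: cmat r M a b i j is the coefficient of
  b_a (x) b_b in c(b_i (x) b_j).\<close>
definition cmat :: "nat \<Rightarrow> wmod \<Rightarrow> nat \<Rightarrow> nat \<Rightarrow> nat \<Rightarrow> nat \<Rightarrow> complex" where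
  "cmat r M a b i j =
     (if a < mdim M \<and> b < mdim M \<and> i < mdim M \<and> j < mdim M \<and> j \<le> a \<and> i = b + (a - j) \<and> a - j < r
      then Rcoef r (a - j) * Epow M (a - j) i * xi r (mwt M b * mwt M a / 2)
      else 0)"

definition cinv :: "nat \<Rightarrow> wmod \<Rightarrow> nat \<Rightarrow> nat \<Rightarrow> nat \<Rightarrow> nat \<Rightarrow> complex" where
  "cinv r M = (SOME B. \<forall>a<mdim M. \<forall>b<mdim M. \<forall>i<mdim M. \<forall>j<mdim M.
       (\<Sum>x<mdim M. \<Sum>y<mdim M. B a b x y * cmat r M x y i j) = (if a = i \<and> b = j then 1 else 0))"

text \<open>Basis of M^(x n): index lists of length n with entries < d.\<close>
definition idx :: "nat \<Rightarrow> nat \<Rightarrow> nat list set" where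
  "idx d n = {l. length l = n \<and> set l \<subseteq> {..<d}}"

text \<open>A braid word is a list of nonzero integers; g > 0 stands for sigma_(g) and
  g < 0 for sigma_(-g)^(-1), sigma_k crossing strands k and k+1 (strands numbered 1..n).
  genop gives the matrix entry (out, inp) of the corresponding operator.\<close>
definition genop :: "nat \<Rightarrow> wmod \<Rightarrow> int \<Rightarrow> nat list \<Rightarrow> nat list \<Rightarrow> complex" where
  "genop r M g out inp =
     (let k = nat \<bar>g\<bar> - 1; A = (if g > 0 then cmat r M else cinv r M) in
      if (\<forall>m<length out. m \<noteq> k \<and> m \<noteq> k + 1 \<longrightarrow> out ! m = inp ! m)
      then A (out ! k) (out ! (k + 1)) (inp ! k) (inp ! (k + 1)) else 0)"

fun braidop :: "nat \<Rightarrow> wmod \<Rightarrow> nat \<Rightarrow> int list \<Rightarrow> nat list \<Rightarrow> nat list \<Rightarrow> complex" where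
  "braidop r M n [] out inp = (if out = inp then 1 else 0)"
| "braidop r M n (g # w) out inp =
     (\<Sum>y\<in>idx (mdim M) n. genop r M g out y * braidop r M n w y inp)"

text \<open>T(V) for the (1,1)-tangle obtained from the braid by closing strands 2..n on the
  right (right partial trace: (id (x) K^(1-r)) then trace), read off as the coefficient
  of b_0 in the image of b_0.\<close>
definition Tval :: "nat \<Rightarrow> nat \<Rightarrow> int list \<Rightarrow> wmod \<Rightarrow> complex" where
  "Tval r n w M = (\<Sum>l\<in>idx (mdim M) (n - 1).
      braidop r M n w (0 # l) (0 # l) *
      (\<Prod>m<n - 1. xi r ((1 - of_nat r) * mwt M (l ! m))))"

definition tr :: "nat \<Rightarrow> nat \<Rightarrow> nat \<Rightarrow> nat" where
  "tr a b x = (if x = a then b else if x = b then a else x)"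

definition braid_perm :: "int list \<Rightarrow> nat \<Rightarrow> nat" where
  "braid_perm w = foldr (\<lambda>g p. tr (nat \<bar>g\<bar> - 1) (nat \<bar>g\<bar>) \<circ> p) w id"

definition valid_braid :: "nat \<Rightarrow> int list \<Rightarrow> bool" where
  "valid_braid n w \<longleftrightarrow> n \<ge> 1 \<and> (\<forall>g\<in>set w. g \<noteq> 0 \<and> \<bar>g\<bar> \<le> int n - 1)"

text \<open>The closure of the braid is a knot (one component) iff its permutation is an n-cycle.\<close>
definition knot_braid :: "nat \<Rightarrow> int list \<Rightarrow> bool" where
  "knot_braid n w \<longleftrightarrow> valid_braid n w \<and> {..<n} \<subseteq> range (\<lambda>m. (braid_perm w ^^ m) 0)"

definition writhe :: "int list \<Rightarrow> int" where
  "writhe w = sum_list (map sgn w)"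

definition Hr :: "nat \<Rightarrow> int set" where
  "Hr r = (\<lambda>m. 2 * int m - (int r - 1)) ` {..<r}"

text \<open>CGP invariant N_r(M, omega_alpha), M = 0-surgery on the knot (closure of braid).\<close>
definition CGP :: "nat \<Rightarrow> nat \<Rightarrow> int list \<Rightarrow> complex \<Rightarrow> complex" where
  "CGP r n w \<alpha> = (\<Sum>k\<in>Hr r. (curly r (\<alpha> + of_int k))^2 / (curly r 1)^2
                    * Tval r n w (Vmod r (\<alpha> + of_int k))) / (qnum r (of_nat r * \<alpha>))^2"

definition WRT :: "nat \<Rightarrow> nat \<Rightarrow> int list \<Rightarrow> complex" where
  "WRT r n w = inverse ((complex_of_real (Dconst r))^2) *
     (\<Sum>j\<in>{0..r-2}. (curly r (of_nat j + 1))^2 / (curly r 1)^2 * Tval r n w (Smod r j))"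

definition WRTspin :: "nat \<Rightarrow> nat \<Rightarrow> int list \<Rightarrow> nat \<Rightarrow> complex" where
  "WRTspin r n w i = inverse ((complex_of_real (Dconst r))^2) *
     (\<Sum>j\<in>{j\<in>{0..r-2}. j mod 2 = i}. (curly r (of_nat j + 1))^2 / (curly r 1)^2 * Tval r n w (Smod r j))"

end

theory Submission
  imports Defs "HOL-Combinatorics.Cycles" "HOL-Analysis.Complex_Transcendental"
begin

lemma xi_add: "xi r (a + b) = xi r a * xi r b"
  unfolding xi_def by (simp add: add_divide_distrib distrib_left exp_add[symmetric] algebra_simps)

lemma xi_nz[simp]: "xi r a \<noteq> 0" unfolding xi_def by simp

lemma xi_zero[simp]: "xi r 0 = 1" unfolding xi_def by simp

lemma xi_neg: "xi r (- a) = inverse (xi r a)"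
  by (metis add.right_inverse xi_add xi_nz xi_zero inverse_unique)

lemma xi_diff: "xi r (a - b) = xi r a / xi r b"
  by (simp add: xi_add[of r a "-b", simplified] xi_neg divide_inverse)

lemma xi_pow: "(xi r a) ^ m = xi r (of_nat m * a)"
  by (induction m) (simp_all add: xi_add distrib_right)

lemma xi_r: "r > 0 \<Longrightarrow> xi r (of_nat r) = -1"
  unfolding xi_def by (simp add: exp_pi_i')

lemma xi_shift: "r > 0 \<Longrightarrow> xi r (a + of_nat r) = - xi r a"
  by (simp add: xi_add xi_r)

lemma curly_neg: "curly r (- z) = - curly r z" unfolding curly_def by simp
lemma curly_zero[simp]: "curly r 0 = 0" unfolding curly_def by simp
lemma curly_shift: "r > 0 \<Longrightarrow> curly r (z + of_nat r) = - curly r z"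
  unfolding curly_def using xi_shift[of r z] xi_shift[of r "-z-of_nat r"] by (simp add: algebra_simps)

lemma xi_eq_1_iff: assumes "r > 0" shows "xi r z = 1 \<longleftrightarrow> (\<exists>k::int. z = 2 * of_nat r * of_int k)"
proof -
  have "xi r z = 1 \<longleftrightarrow> exp (complex_of_real pi * \<i> * z / of_nat r) = 1" by (simp add: xi_def)
  also have "\<dots> \<longleftrightarrow> (\<exists>k::int. z = 2 * of_nat r * of_int k)"
    unfolding exp_eq_1 using assms
    apply (auto simp: field_simps complex_eq_iff)
    done
  finally show ?thesis .
qed

lemma curly_eq_0_iff: assumes "r > 0" shows "curly r z = 0 \<longleftrightarrow> (\<exists>k::int. z = of_nat r * of_int k)"
proof -
  have "curly r z = 0 \<longleftrightarrow> xi r (2*z) = 1"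
  proof -
    have "curly r z = 0 \<longleftrightarrow> xi r z = inverse (xi r z)" unfolding curly_def xi_neg by simp
    also have "\<dots> \<longleftrightarrow> xi r z * xi r z = 1" using xi_nz[of r z] by (metis inverse_unique right_inverse)
    also have "xi r z * xi r z = xi r (2*z)" by (simp only: mult_2 xi_add)
    finally show ?thesis .
  qed
  also have "\<dots> \<longleftrightarrow> (\<exists>k::int. z = of_nat r * of_int k)"
    using xi_eq_1_iff[OF assms, of "2*z"] by auto
  finally show ?thesis .
qed

definition Rbar :: "nat \<Rightarrow> nat \<Rightarrow> complex" where
  "Rbar r m = (-1)^m * (curly r 1)^(2 * m) / qfact r m * xi r (- of_nat (m * (m - 1)) / 2)"

lemma qfact_0[simp]: "qfact r 0 = 1" by (simp add: qfact_def)
lemma qfact_Suc: "qfact r (Suc m) = qfact r m * curly r (of_nat (Suc m))"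
  by (simp add: qfact_def prod.nat_ivl_Suc')

lemma curly_nat_nz: assumes "0 < k" "k < r" shows "curly r (of_nat k) \<noteq> 0"
proof
  assume "curly r (of_nat k) = 0"
  then obtain j :: int where j: "complex_of_nat k = of_nat r * of_int j"
    using curly_eq_0_iff[of r "of_nat k"] assms by auto
  hence "int k = int r * j" by (metis of_int_eq_iff of_int_mult of_int_of_nat_eq)
  with assms show False
    by (metis (no_types, opaque_lifting) int_ops(1) less_le_not_le mult_cancel_left1 nat_int_comparison(2) of_nat_0_less_iff pos_imp_zdiv_pos_iff pos_zmult_eq_1_iff_lemma zero_less_mult_pos zmult_zless_mono2_lemma dvd_imp_le dvd_triv_left int_dvd_int_iff)
qed

lemma qfact_nz: "m < r \<Longrightarrow> qfact r m \<noteq> 0"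
proof (induction m)
  case (Suc m)
  have "curly r (of_nat (Suc m)) \<noteq> 0" using Suc.prems by (intro curly_nat_nz) auto
  with Suc show ?case by (simp only: qfact_Suc) simp
qed simp

lemma curly_pascal: "curly r (a + b) = xi r b * curly r a + xi r (- a) * curly r b"
  unfolding curly_def by (simp add: xi_add[symmetric] algebra_simps)

definition Pq :: "nat \<Rightarrow> nat \<Rightarrow> complex \<Rightarrow> complex" where
  "Pq r s x = (\<Sum>m=0..s. (-1)^m * x^m / (qfact r m * qfact r (s - m)))"

lemma Pq_rec:
  assumes sr: "Suc s < r"
  shows "curly r (of_nat (Suc s)) * Pq r (Suc s) x = (1 - x * xi r (- of_nat s)) * Pq r s (x * xi r 1)"
proof -
  define A where "A m = (-1)^m * x^m * (xi r (of_nat m) * curly r (of_nat (Suc s - m))) / (qfact r m * qfact r (Suc s - m))" for m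
  define B where "B m = (-1)^m * x^m * (xi r (- of_nat (Suc s - m)) * curly r (of_nat m)) / (qfact r m * qfact r (Suc s - m))" for m
  define T where "T m = (-1)^m * (x * xi r 1)^m / (qfact r m * qfact r (s - m))" for m
  have split: "curly r (of_nat (Suc s)) * ((-1)^m * x^m / (qfact r m * qfact r (Suc s - m))) = A m + B m"
    if "m \<in> {0..Suc s}" for m
  proof -
    have "curly r (of_nat (Suc s)) = curly r (of_nat (Suc s - m) + of_nat m)"
      using that by (simp add: of_nat_diff[symmetric])
    also have "\<dots> = xi r (of_nat m) * curly r (of_nat (Suc s - m)) + xi r (- of_nat (Suc s - m)) * curly r (of_nat m)"
      by (rule curly_pascal)
    finally show ?thesis unfolding A_def B_def by (simp add: add_divide_distrib algebra_simps)
  qed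
  have A_eq: "A m = T m" if "m \<in> {0..s}" for m
  proof -
    have m: "m \<le> s" using that by simp
    have q1: "qfact r (Suc s - m) = qfact r (s - m) * curly r (of_nat (Suc s - m))"
      using m by (simp add: Suc_diff_le qfact_Suc)
    have nz1: "curly r (of_nat (Suc s - m)) \<noteq> 0" using m sr by (intro curly_nat_nz) auto
    have pw: "(x * xi r 1)^m = x^m * xi r (of_nat m)" by (simp add: power_mult_distrib xi_pow)
    show ?thesis unfolding A_def T_def q1 pw using nz1 by (simp add: field_simps)
  qed
  have B_eq: "B (Suc m) = - (x * xi r (- of_nat s)) * T m" if "m \<in> {0..s}" for m
  proof -
    have m: "m \<le> s" using that by simp
    have q1: "qfact r (Suc m) = qfact r m * curly r (of_nat (Suc m))" by (rule qfact_Suc)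
    have nz1: "curly r (of_nat (Suc m)) \<noteq> 0" using m sr by (intro curly_nat_nz) auto
    have pw: "(x * xi r 1)^m = x^m * xi r (of_nat m)" by (simp add: power_mult_distrib xi_pow)
    have e: "xi r (- of_nat (Suc s - Suc m)) = xi r (- of_nat s) * xi r (of_nat m)"
      using m by (simp add: of_nat_diff xi_add[symmetric])
    show ?thesis unfolding B_def T_def q1 pw e using nz1 by (simp add: field_simps)
  qed
  have "curly r (of_nat (Suc s)) * Pq r (Suc s) x = (\<Sum>m=0..Suc s. A m + B m)"
    unfolding Pq_def sum_distrib_left using split by (rule sum.cong[OF refl])
  also have "\<dots> = (\<Sum>m=0..Suc s. A m) + (\<Sum>m=0..Suc s. B m)" by (rule sum.distrib)
  also have "(\<Sum>m=0..Suc s. A m) = (\<Sum>m=0..s. A m) + A (Suc s)" by simp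
  also have "A (Suc s) = 0" by (simp add: A_def)
  also have "(\<Sum>m=0..s. A m) = (\<Sum>m=0..s. T m)" using A_eq by (rule sum.cong[OF refl])
  also have "(\<Sum>m=0..Suc s. B m) = B 0 + (\<Sum>m=0..s. B (Suc m))" using sum.atLeast0_atMost_Suc_shift[of B s] by (simp only: comp_def)
  also have "B 0 = 0" by (simp add: B_def)
  also have "(\<Sum>m=0..s. B (Suc m)) = (\<Sum>m=0..s. - (x * xi r (- of_nat s)) * T m)"
    using B_eq by (rule sum.cong[OF refl])
  also have "(\<Sum>m=0..s. - (x * xi r (- of_nat s)) * T m) = - (x * xi r (- of_nat s)) * (\<Sum>m=0..s. T m)"
    by (simp add: sum_distrib_left)
  also have "(\<Sum>m=0..s. T m) = Pq r s (x * xi r 1)" by (simp add: T_def Pq_def)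
  finally show ?thesis by (simp add: algebra_simps)
qed

lemma Pq_zero: assumes "1 \<le> s" "s < r" shows "Pq r s (xi r (1 - of_nat s)) = 0"
  using assms
proof (induction s rule: dec_induct)
  case base
  show ?case by (simp add: Pq_def qfact_def)
next
  case (step s)
  have "curly r (of_nat (Suc s)) * Pq r (Suc s) (xi r (1 - of_nat (Suc s)))
      = (1 - xi r (1 - of_nat (Suc s)) * xi r (- of_nat s)) * Pq r s (xi r (1 - of_nat (Suc s)) * xi r 1)"
    using step.prems by (intro Pq_rec) auto
  also have "xi r (1 - of_nat (Suc s)) * xi r 1 = xi r (1 - of_nat s)"
    by (simp add: xi_add[symmetric])
  also have "Pq r s (xi r (1 - of_nat s)) = 0" using step by auto
  finally have "curly r (of_nat (Suc s)) * Pq r (Suc s) (xi r (1 - of_nat (Suc s))) = 0" by simp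
  moreover have "curly r (of_nat (Suc s)) \<noteq> 0" using step.prems by (intro curly_nat_nz) auto
  ultimately show ?case by simp
qed

lemma of_nat_kk1: "(of_nat (k * (k - 1)) :: complex) = of_nat k * (of_nat k - 1)"
  by (cases k) (simp_all add: algebra_simps)

lemma R_inv_sum:
  assumes "s < r"
  shows "(\<Sum>m=0..s. Rcoef r (s - m) * Rbar r m) = (if s = 0 then 1 else 0)"
proof (cases "s = 0")
  case True thus ?thesis by (simp add: Rcoef_def Rbar_def)
next
  case False
  define cc where "cc = (curly r 1)^(2 * s) * xi r (of_nat (s * (s - 1)) / 2)"
  have trm: "Rcoef r (s - m) * Rbar r m = cc * ((-1)^m * (xi r (1 - of_nat s))^m / (qfact r m * qfact r (s - m)))"
    if "m \<in> {0..s}" for m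
  proof -
    have m: "m \<le> s" using that by simp
    have pw: "(curly r 1)^(2 * (s-m)) * (curly r 1)^(2 * m) = (curly r 1)^(2 * s)"
    proof -
      have "2 * (s - m) + 2 * m = 2 * s" using m by simp
      thus ?thesis by (simp only: power_add[symmetric])
    qed
    have ex: "of_nat ((s - m) * (s - m - 1)) / 2 + - of_nat (m * (m - 1)) / 2
        = of_nat (s * (s - 1)) / 2 + of_nat m * (1 - of_nat s :: complex)"
    proof -
      have k1: "(of_nat ((s - m) * (s - m - 1)) :: complex) = (of_nat s - of_nat m) * (of_nat s - of_nat m - 1)"
        using of_nat_kk1[of "s - m"] m by (simp add: of_nat_diff)
      have k2: "(of_nat (m * (m - 1)) :: complex) = of_nat m * (of_nat m - 1)" by (rule of_nat_kk1)
      have k3: "(of_nat (s * (s - 1)) :: complex) = of_nat s * (of_nat s - 1)" by (rule of_nat_kk1)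
      show ?thesis unfolding k1 k2 k3 by (simp add: field_simps)
    qed
    have xe: "xi r (of_nat ((s - m) * (s - m - 1)) / 2) * xi r (- of_nat (m * (m - 1)) / 2)
        = xi r (of_nat (s * (s - 1)) / 2) * (xi r (1 - of_nat s))^m"
    proof -
      have "xi r (of_nat ((s - m) * (s - m - 1)) / 2) * xi r (- of_nat (m * (m - 1)) / 2)
          = xi r (of_nat ((s - m) * (s - m - 1)) / 2 + - of_nat (m * (m - 1)) / 2)"
        by (rule xi_add[symmetric])
      also have "\<dots> = xi r (of_nat (s * (s - 1)) / 2 + of_nat m * (1 - of_nat s))" by (simp only: ex)
      also have "\<dots> = xi r (of_nat (s * (s - 1)) / 2) * (xi r (1 - of_nat s))^m"
        by (simp only: xi_add xi_pow)
      finally show ?thesis .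
    qed
    have "Rcoef r (s - m) * Rbar r m = ((curly r 1)^(2 * (s-m)) * (curly r 1)^(2 * m)) * (-1)^m
        * (xi r (of_nat ((s - m) * (s - m - 1)) / 2) * xi r (- of_nat (m * (m - 1)) / 2))
        / (qfact r m * qfact r (s - m))"
      unfolding Rcoef_def Rbar_def by (simp add: field_simps)
    also have "\<dots> = cc * ((-1)^m * (xi r (1 - of_nat s))^m / (qfact r m * qfact r (s - m)))"
      unfolding pw xe cc_def by (simp add: field_simps)
    finally show ?thesis .
  qed
  have "(\<Sum>m=0..s. Rcoef r (s - m) * Rbar r m) = cc * Pq r s (xi r (1 - of_nat s))"
    unfolding Pq_def sum_distrib_left by (rule sum.cong[OF refl]) (rule trm)
  also have "Pq r s (xi r (1 - of_nat s)) = 0" using False assms by (intro Pq_zero) auto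
  finally show ?thesis using False by simp
qed

definition cinvE :: "nat \<Rightarrow> wmod \<Rightarrow> nat \<Rightarrow> nat \<Rightarrow> nat \<Rightarrow> nat \<Rightarrow> complex" where
  "cinvE r M i j a b =
     (if i < mdim M \<and> j < mdim M \<and> a < mdim M \<and> b < mdim M \<and> i \<le> b \<and> a \<le> j \<and> b - i = j - a
      then Rbar r (b - i) * Epow M (b - i) b * xi r (- (mwt M b * mwt M a / 2))
      else 0)"

lemma Epow_comp:
  assumes "n \<le> i"
  shows "Epow M m (i - n) * Epow M n i = Epow M (m + n) i"
proof (cases "m + n \<le> i")
  case True
  have "(\<Prod>k<m. mE M (i - n - k)) * (\<Prod>k<n. mE M (i - k)) = (\<Prod>k<m + n. mE M (i - k))"
  proof (induction m)
    case 0 then show ?case by simp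
  next
    case (Suc m)
    have "(\<Prod>k<Suc m. mE M (i - n - k)) * (\<Prod>k<n. mE M (i - k))
        = ((\<Prod>k<m. mE M (i - n - k)) * (\<Prod>k<n. mE M (i - k))) * mE M (i - n - m)"
      by (simp add: ac_simps)
    also have "\<dots> = (\<Prod>k<m + n. mE M (i - k)) * mE M (i - (m + n))"
      using Suc.IH by (simp add: algebra_simps)
    also have "\<dots> = (\<Prod>k<Suc m + n. mE M (i - k))" by simp
    finally show ?case .
  qed
  with True assms show ?thesis unfolding Epow_def by simp
next
  case False
  then show ?thesis using assms unfolding Epow_def by auto
qed

lemma sum2_support:
  fixes f :: "nat \<Rightarrow> nat \<Rightarrow> complex"
  assumes "\<And>x y. x < d \<Longrightarrow> y < d \<Longrightarrow> f x y \<noteq> 0 \<Longrightarrow> (x, y) \<in> p ` S"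
    and "finite S" and "inj_on p S" and "p ` S \<subseteq> {..<d} \<times> {..<d}"
  shows "(\<Sum>x<d. \<Sum>y<d. f x y) = (\<Sum>m\<in>S. f (fst (p m)) (snd (p m)))"
proof -
  have "(\<Sum>x<d. \<Sum>y<d. f x y) = (\<Sum>z\<in>{..<d} \<times> {..<d}. f (fst z) (snd z))"
    by (simp add: sum.cartesian_product case_prod_beta)
  also have "\<dots> = (\<Sum>z\<in>p ` S. f (fst z) (snd z))"
    using assms(1,4) by (intro sum.mono_neutral_right) (auto, metis)
  also have "\<dots> = (\<Sum>m\<in>S. f (fst (p m)) (snd (p m)))"
    using assms(3) by (simp add: sum.reindex)
  finally show ?thesis .
qed

lemma xi_neg_cancel: "xi r (- z) * xi r z = 1"
  by (simp add: xi_neg)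

lemma cinvE_left:
  assumes dr: "mdim M \<le> r" and idx: "i' < mdim M" "j' < mdim M" "i < mdim M" "j < mdim M"
  shows "(\<Sum>x<mdim M. \<Sum>y<mdim M. cinvE r M i' j' x y * cmat r M x y i j) = (if i' = i \<and> j' = j then 1 else 0)"
proof -
  define d where "d = mdim M"
  have nzD: "i' \<le> y \<and> x \<le> j' \<and> y - i' = j' - x \<and> j \<le> x \<and> i = y + (x - j)"
    if "cinvE r M i' j' x y * cmat r M x y i j \<noteq> 0" for x y
    using that unfolding cinvE_def cmat_def by (auto split: if_splits)
  show ?thesis
  proof (cases "i' \<le> i \<and> j \<le> j' \<and> i - i' = j' - j")
    case False
    have z: "cinvE r M i' j' x y * cmat r M x y i j = 0" for x y
    proof (rule ccontr)
      assume "cinvE r M i' j' x y * cmat r M x y i j \<noteq> 0"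
      from nzD[OF this] False show False by auto
    qed
    have "\<not> (i' = i \<and> j' = j)" using False by auto
    thus ?thesis by (simp only: z sum.neutral_const if_False)
  next
    case True
    define s where "s = i - i'"
    have s1: "i = i' + s" and s2: "j' = j + s" using True by (auto simp: s_def)
    have sd: "s < r" using idx dr s1 by simp
    have "(\<Sum>x<mdim M. \<Sum>y<mdim M. cinvE r M i' j' x y * cmat r M x y i j)
        = (\<Sum>m\<in>{0..s}. cinvE r M i' j' (fst (j' - m, i' + m)) (snd (j' - m, i' + m))
              * cmat r M (fst (j' - m, i' + m)) (snd (j' - m, i' + m)) i j)"
    proof (rule sum2_support[where f = "\<lambda>x y. cinvE r M i' j' x y * cmat r M x y i j"])
      fix x y assume "x < mdim M" "y < mdim M" "cinvE r M i' j' x y * cmat r M x y i j \<noteq> 0"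
      from nzD[OF this(3)] have h: "i' \<le> y \<and> x \<le> j' \<and> y - i' = j' - x \<and> j \<le> x \<and> i = y + (x - j)" .
      show "(x, y) \<in> (\<lambda>m. (j' - m, i' + m)) ` {0..s}"
        using h s1 s2 by (intro image_eqI[where x = "y - i'"]) auto
    next
      show "inj_on (\<lambda>m. (j' - m, i' + m)) {0..s}" by (auto simp: inj_on_def)
      show "(\<lambda>m. (j' - m, i' + m)) ` {0..s} \<subseteq> {..<mdim M} \<times> {..<mdim M}"
        using idx s1 s2 by auto
    qed simp
    also have "\<dots> = (\<Sum>m\<in>{0..s}. Epow M s i * (Rcoef r (s - m) * Rbar r m))"
    proof (rule sum.cong[OF refl])
      fix m assume "m \<in> {0..s}"
      hence m: "m \<le> s" by simp
      have ci: "cinvE r M i' j' (j' - m) (i' + m) = Rbar r m * Epow M m (i' + m)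
          * xi r (- (mwt M (i' + m) * mwt M (j' - m) / 2))"
        unfolding cinvE_def using m idx s1 s2 by auto
      have cm: "cmat r M (j' - m) (i' + m) i j = Rcoef r (s - m) * Epow M (s - m) i
          * xi r (mwt M (i' + m) * mwt M (j' - m) / 2)"
        unfolding cmat_def using m idx s1 s2 sd by auto
      have ep: "Epow M m (i' + m) * Epow M (s - m) i = Epow M s i"
        using Epow_comp[of "s - m" i M m] m s1 by (simp add: algebra_simps)
      show "cinvE r M i' j' (fst (j' - m, i' + m)) (snd (j' - m, i' + m))
              * cmat r M (fst (j' - m, i' + m)) (snd (j' - m, i' + m)) i j
            = Epow M s i * (Rcoef r (s - m) * Rbar r m)"
        unfolding fst_conv snd_conv ci cm
        using ep xi_neg_cancel[of r "mwt M (i' + m) * mwt M (j' - m) / 2"]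
        by (simp add: algebra_simps)
    qed
    also have "\<dots> = Epow M s i * (if s = 0 then 1 else 0)"
      by (simp add: sum_distrib_left[symmetric] R_inv_sum[OF sd])
    also have "\<dots> = (if i' = i \<and> j' = j then 1 else 0)"
      using s1 s2 by (auto simp: Epow_def)
    finally show ?thesis .
  qed
qed

lemma cinvE_right:
  assumes dr: "mdim M \<le> r" and idx: "a' < mdim M" "b' < mdim M" "a < mdim M" "b < mdim M"
  shows "(\<Sum>x<mdim M. \<Sum>y<mdim M. cmat r M a' b' x y * cinvE r M x y a b) = (if a' = a \<and> b' = b then 1 else 0)"
proof -
  have nzD: "y \<le> a' \<and> x = b' + (a' - y) \<and> x \<le> b \<and> a \<le> y \<and> b - x = y - a"
    if "cmat r M a' b' x y * cinvE r M x y a b \<noteq> 0" for x y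
    using that unfolding cinvE_def cmat_def by (auto split: if_splits)
  show ?thesis
  proof (cases "a \<le> a' \<and> b' \<le> b \<and> a' - a = b - b'")
    case False
    have z: "cmat r M a' b' x y * cinvE r M x y a b = 0" for x y
    proof (rule ccontr)
      assume "cmat r M a' b' x y * cinvE r M x y a b \<noteq> 0"
      from nzD[OF this] False show False by auto
    qed
    have "\<not> (a' = a \<and> b' = b)" using False by auto
    thus ?thesis by (simp only: z sum.neutral_const if_False)
  next
    case True
    define s where "s = a' - a"
    have s1: "a' = a + s" and s2: "b = b' + s" using True by (auto simp: s_def)
    have sd: "s < r" using idx dr s1 by simp
    have "(\<Sum>x<mdim M. \<Sum>y<mdim M. cmat r M a' b' x y * cinvE r M x y a b)
        = (\<Sum>m\<in>{0..s}. cmat r M a' b' (fst (b - m, a + m)) (snd (b - m, a + m))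
              * cinvE r M (fst (b - m, a + m)) (snd (b - m, a + m)) a b)"
    proof (rule sum2_support[where f = "\<lambda>x y. cmat r M a' b' x y * cinvE r M x y a b"])
      fix x y assume "x < mdim M" "y < mdim M" "cmat r M a' b' x y * cinvE r M x y a b \<noteq> 0"
      from nzD[OF this(3)] have h: "y \<le> a' \<and> x = b' + (a' - y) \<and> x \<le> b \<and> a \<le> y \<and> b - x = y - a" .
      show "(x, y) \<in> (\<lambda>m. (b - m, a + m)) ` {0..s}"
        using h s1 s2 by (intro image_eqI[where x = "y - a"]) auto
    next
      show "inj_on (\<lambda>m. (b - m, a + m)) {0..s}" by (auto simp: inj_on_def)
      show "(\<lambda>m. (b - m, a + m)) ` {0..s} \<subseteq> {..<mdim M} \<times> {..<mdim M}"
        using idx s1 s2 by auto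
    qed simp
    also have "\<dots> = (\<Sum>m\<in>{0..s}. (Epow M s b * xi r (mwt M b' * mwt M a' / 2) * xi r (- (mwt M b * mwt M a / 2)))
                         * (Rcoef r (s - m) * Rbar r m))"
    proof (rule sum.cong[OF refl])
      fix m assume "m \<in> {0..s}"
      hence m: "m \<le> s" by simp
      have cm: "cmat r M a' b' (b - m) (a + m) = Rcoef r (s - m) * Epow M (s - m) (b - m)
          * xi r (mwt M b' * mwt M a' / 2)"
        unfolding cmat_def using m idx s1 s2 sd by auto
      have ci: "cinvE r M (b - m) (a + m) a b = Rbar r m * Epow M m b * xi r (- (mwt M b * mwt M a / 2))"
        unfolding cinvE_def using m idx s1 s2 by auto
      have ep: "Epow M (s - m) (b - m) * Epow M m b = Epow M s b"
        using Epow_comp[of m b M "s - m"] m s2 by simp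
      show "cmat r M a' b' (fst (b - m, a + m)) (snd (b - m, a + m))
              * cinvE r M (fst (b - m, a + m)) (snd (b - m, a + m)) a b
            = (Epow M s b * xi r (mwt M b' * mwt M a' / 2) * xi r (- (mwt M b * mwt M a / 2)))
                * (Rcoef r (s - m) * Rbar r m)"
        unfolding fst_conv snd_conv ci cm using ep by (simp add: algebra_simps)
    qed
    also have "\<dots> = (Epow M s b * xi r (mwt M b' * mwt M a' / 2) * xi r (- (mwt M b * mwt M a / 2)))
                         * (if s = 0 then 1 else 0)"
      by (simp add: sum_distrib_left[symmetric] R_inv_sum[OF sd])
    also have "\<dots> = (if a' = a \<and> b' = b then 1 else 0)"
      using s1 s2 xi_neg_cancel[of r "mwt M b * mwt M a / 2"] by (auto simp: Epow_def algebra_simps)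
    finally show ?thesis .
  qed
qed

lemma sum2_pair: "(\<Sum>x<d. \<Sum>y<d. h x y) = (\<Sum>z\<in>{..<d} \<times> {..<d}. h (fst z) (snd z))"
  by (simp add: sum.cartesian_product case_prod_beta)

lemma matrix_assoc_pairs:
  fixes B C E :: "nat \<Rightarrow> nat \<Rightarrow> nat \<Rightarrow> nat \<Rightarrow> complex"
  shows "(\<Sum>w\<in>D. (\<Sum>t\<in>D. B a b (fst t) (snd t) * C (fst t) (snd t) (fst w) (snd w)) * E (fst w) (snd w) i j)
       = (\<Sum>t\<in>D. B a b (fst t) (snd t) * (\<Sum>w\<in>D. C (fst t) (snd t) (fst w) (snd w) * E (fst w) (snd w) i j))"
proof -
  have "(\<Sum>w\<in>D. (\<Sum>t\<in>D. B a b (fst t) (snd t) * C (fst t) (snd t) (fst w) (snd w)) * E (fst w) (snd w) i j)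
      = (\<Sum>w\<in>D. \<Sum>t\<in>D. B a b (fst t) (snd t) * C (fst t) (snd t) (fst w) (snd w) * E (fst w) (snd w) i j)"
    by (simp only: sum_distrib_right)
  also have "\<dots> = (\<Sum>t\<in>D. \<Sum>w\<in>D. B a b (fst t) (snd t) * C (fst t) (snd t) (fst w) (snd w) * E (fst w) (snd w) i j)"
    by (rule sum.swap)
  also have "\<dots> = (\<Sum>t\<in>D. B a b (fst t) (snd t) * (\<Sum>w\<in>D. C (fst t) (snd t) (fst w) (snd w) * E (fst w) (snd w) i j))"
    by (simp only: sum_distrib_left mult.assoc)
  finally show ?thesis .
qed

lemma cinv_eq:
  assumes dr: "mdim M \<le> r" and idx: "a < mdim M" "b < mdim M" "i < mdim M" "j < mdim M"
  shows "cinv r M a b i j = cinvE r M a b i j"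
proof -
  define d where "d = mdim M"
  define P where "P B \<longleftrightarrow> (\<forall>a<mdim M. \<forall>b<mdim M. \<forall>i<mdim M. \<forall>j<mdim M.
       (\<Sum>x<mdim M. \<Sum>y<mdim M. B a b x y * cmat r M x y i j) = (if a = i \<and> b = j then 1 else 0))" for B
  have PE: "P (cinvE r M)" unfolding P_def using cinvE_left[OF dr] by blast
  have cinv_some: "cinv r M = (SOME B. P B)" unfolding cinv_def P_def ..
  have PB: "P (cinv r M)" unfolding cinv_some by (rule someI[of P, OF PE])
  define B where "B = cinv r M"
  define D where "D = {..<mdim M} \<times> {..<mdim M}"
  have BC: "(\<Sum>t\<in>D. B a b (fst t) (snd t) * cmat r M (fst t) (snd t) (fst w) (snd w))
        = (if a = fst w \<and> b = snd w then 1 else 0)" if "w \<in> D" for w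
    using PB that idx unfolding P_def B_def D_def sum2_pair by auto
  have CE: "(\<Sum>w\<in>D. cmat r M (fst t) (snd t) (fst w) (snd w) * cinvE r M (fst w) (snd w) i j)
        = (if fst t = i \<and> snd t = j then 1 else 0)" if "t \<in> D" for t
    using cinvE_right[OF dr, of "fst t" "snd t" i j] that idx unfolding D_def sum2_pair by auto
  have "cinvE r M a b i j = (\<Sum>w\<in>D. (if a = fst w \<and> b = snd w then 1 else 0) * cinvE r M (fst w) (snd w) i j)"
  proof -
    have "(\<Sum>w\<in>D. (if a = fst w \<and> b = snd w then 1 else 0) * cinvE r M (fst w) (snd w) i j)
        = (\<Sum>w\<in>D. if w = (a, b) then cinvE r M (fst w) (snd w) i j else 0)"
      by (rule sum.cong) auto
    also have "\<dots> = cinvE r M a b i j" using idx by (simp add: D_def)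
    finally show ?thesis by simp
  qed
  also have "\<dots> = (\<Sum>w\<in>D. (\<Sum>t\<in>D. B a b (fst t) (snd t) * cmat r M (fst t) (snd t) (fst w) (snd w)) * cinvE r M (fst w) (snd w) i j)"
    using BC by (intro sum.cong) auto
  also have "\<dots> = (\<Sum>t\<in>D. B a b (fst t) (snd t) * (\<Sum>w\<in>D. cmat r M (fst t) (snd t) (fst w) (snd w) * cinvE r M (fst w) (snd w) i j))"
    by (rule matrix_assoc_pairs)
  also have "\<dots> = (\<Sum>t\<in>D. B a b (fst t) (snd t) * (if fst t = i \<and> snd t = j then 1 else 0))"
    using CE by (intro sum.cong) auto
  also have "\<dots> = (\<Sum>t\<in>D. if t = (i, j) then B a b (fst t) (snd t) else 0)"
    by (rule sum.cong) auto
  also have "\<dots> = B a b i j" using idx by (simp add: D_def)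
  finally show ?thesis by (simp add: B_def)
qed

lemma idx_iff: "x \<in> idx d n \<longleftrightarrow> length x = n \<and> (\<forall>m<n. x ! m < d)"
  unfolding idx_def by (auto simp: in_set_conv_nth subset_iff)

lemma finite_idx: "finite (idx d n)"
proof -
  have "idx d n \<subseteq> {xs. set xs \<subseteq> {..<d} \<and> length xs = n}" unfolding idx_def by auto
  moreover have "finite {xs. set xs \<subseteq> {..<d} \<and> length xs = n}"
    by (rule finite_lists_length_eq) simp
  ultimately show ?thesis by (rule finite_subset)
qed

lemma braid_perm_Nil[simp]: "braid_perm [] = id" by (simp add: braid_perm_def)
lemma braid_perm_Cons: "braid_perm (g # w) = tr (nat \<bar>g\<bar> - 1) (nat \<bar>g\<bar>) \<circ> braid_perm w"
  by (simp add: braid_perm_def)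

lemma tr_transpose: "tr a b = Transposition.transpose a b"
  unfolding tr_def by (auto simp: Transposition.transpose_def)

lemma valid_braid_Cons: "valid_braid n (g # w) \<longleftrightarrow> valid_braid n w \<and> g \<noteq> 0 \<and> \<bar>g\<bar> \<le> int n - 1"
  unfolding valid_braid_def by auto

lemma braid_perm_permutes: "valid_braid n w \<Longrightarrow> braid_perm w permutes {..<n}"
proof (induction w)
  case Nil thus ?case using permutes_id[of "{..<n}"] by (simp add: id_def)
next
  case (Cons g w)
  hence g: "g \<noteq> 0" "\<bar>g\<bar> \<le> int n - 1" and v: "valid_braid n w" by (auto simp: valid_braid_Cons)
  have "tr (nat \<bar>g\<bar> - 1) (nat \<bar>g\<bar>) permutes {..<n}"
    unfolding tr_transpose using g by (intro permutes_swap_id) auto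
  with Cons.IH[OF v] show ?case unfolding braid_perm_Cons by (rule permutes_compose)
qed

lemma genop_nzD:
  assumes "genop r M g out inp \<noteq> 0"
  shows "(\<forall>m<length out. m \<noteq> nat \<bar>g\<bar> - 1 \<and> m \<noteq> nat \<bar>g\<bar> - 1 + 1 \<longrightarrow> out ! m = inp ! m)
     \<and> (if g > 0 then cmat r M else cinv r M) (out ! (nat \<bar>g\<bar> - 1)) (out ! (nat \<bar>g\<bar> - 1 + 1))
            (inp ! (nat \<bar>g\<bar> - 1)) (inp ! (nat \<bar>g\<bar> - 1 + 1)) \<noteq> 0"
  using assms unfolding genop_def Let_def by (auto split: if_splits)

lemma Epow_zero_at:
  assumes "mE M q = 0" "i - n < q" "q \<le> i" "n \<le> i"
  shows "Epow M n i = 0"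
proof -
  have "i - q \<in> {..<n}" using assms by auto
  moreover have "mE M (i - (i - q)) = 0" using assms by simp
  ultimately show ?thesis unfolding Epow_def using assms(4)
    by (auto intro: prod_zero)
qed

lemma genop_sub_step:
  assumes dr: "mdim V \<le> r" and E0: "q < mdim V \<Longrightarrow> mE V q = 0"
    and out: "out \<in> idx (mdim V) n" and y: "y \<in> idx (mdim V) n"
    and g: "g \<noteq> 0" "\<bar>g\<bar> \<le> int n - 1"
    and nz: "genop r V g out y \<noteq> 0" and m: "m < n" and qm: "q \<le> y ! m"
  shows "q \<le> out ! (tr (nat \<bar>g\<bar> - 1) (nat \<bar>g\<bar>) m)"
proof -
  define k where "k = nat \<bar>g\<bar> - 1"
  have k1: "nat \<bar>g\<bar> = k + 1" using g by (simp add: k_def)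
  have kn: "k + 1 < n" using g k1 by linarith
  have lo: "length out = n" and ly: "length y = n" using out y by (auto simp: idx_iff)
  have bo: "\<And>t. t < n \<Longrightarrow> out ! t < mdim V" and yb: "\<And>t. t < n \<Longrightarrow> y ! t < mdim V"
    using out y by (auto simp: idx_iff)
  from genop_nzD[OF nz] have
    same: "\<And>t. t < n \<Longrightarrow> t \<noteq> k \<Longrightarrow> t \<noteq> k + 1 \<Longrightarrow> out ! t = y ! t" and
    A: "(if g > 0 then cmat r V else cinv r V) (out ! k) (out ! (k + 1)) (y ! k) (y ! (k + 1)) \<noteq> 0"
    unfolding k_def[symmetric] using lo by auto
  have ci: "cinv r V (out ! k) (out ! (k + 1)) (y ! k) (y ! (k + 1)) = cinvE r V (out ! k) (out ! (k + 1)) (y ! k) (y ! (k + 1))"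
    using kn bo yb by (intro cinv_eq dr) auto
  show ?thesis
  proof (cases "m = k")
    case True
    hence trm: "tr (nat \<bar>g\<bar> - 1) (nat \<bar>g\<bar>) m = k + 1" by (simp add: tr_def k1)
    show ?thesis
    proof (cases "g > 0")
      case True
      with A have c: "cmat r V (out ! k) (out ! (k + 1)) (y ! k) (y ! (k + 1)) \<noteq> 0" by simp
      let ?a = "out ! k" and ?b = "out ! (k + 1)" and ?i = "y ! k" and ?j = "y ! (k + 1)"
      from c have h: "?j \<le> ?a" "?i = ?b + (?a - ?j)" "Epow V (?a - ?j) ?i \<noteq> 0"
        unfolding cmat_def by (auto split: if_splits)
      show ?thesis
      proof (rule ccontr)
        assume "\<not> q \<le> out ! (tr (nat \<bar>g\<bar> - 1) (nat \<bar>g\<bar>) m)"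
        hence "?b < q" using trm by simp
        moreover have "q \<le> ?i" using qm \<open>m = k\<close> by simp
        moreover have "?i < mdim V" using yb kn by simp
        ultimately have "Epow V (?a - ?j) ?i = 0" using h E0
          by (intro Epow_zero_at) auto
        with h show False by simp
      qed
    next
      case False
      with A ci have c: "cinvE r V (out ! k) (out ! (k + 1)) (y ! k) (y ! (k + 1)) \<noteq> 0" by simp
      hence "y ! k \<le> out ! (k + 1)" unfolding cinvE_def by (auto split: if_splits)
      thus ?thesis using qm trm \<open>m = k\<close> by simp
    qed
  next
    case mk: False
    show ?thesis
    proof (cases "m = k + 1")
      case True
      hence trm: "tr (nat \<bar>g\<bar> - 1) (nat \<bar>g\<bar>) m = k" by (simp add: tr_def k1)
      show ?thesis
      proof (cases "g > 0")
        case True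
        with A have c: "cmat r V (out ! k) (out ! (k + 1)) (y ! k) (y ! (k + 1)) \<noteq> 0" by simp
        hence "y ! (k + 1) \<le> out ! k" unfolding cmat_def by (auto split: if_splits)
        thus ?thesis using qm trm \<open>m = k + 1\<close> by simp
      next
        case False
        with A ci have c: "cinvE r V (out ! k) (out ! (k + 1)) (y ! k) (y ! (k + 1)) \<noteq> 0" by simp
        let ?i = "out ! k" and ?j = "out ! (k + 1)" and ?a = "y ! k" and ?b = "y ! (k + 1)"
        from c have h: "?i \<le> ?b" "Epow V (?b - ?i) ?b \<noteq> 0"
          unfolding cinvE_def by (auto split: if_splits)
        show ?thesis
        proof (rule ccontr)
          assume "\<not> q \<le> out ! (tr (nat \<bar>g\<bar> - 1) (nat \<bar>g\<bar>) m)"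
          hence "?i < q" using trm by simp
          moreover have "q \<le> ?b" using qm \<open>m = k + 1\<close> by simp
          moreover have "?b < mdim V" using yb kn by simp
          ultimately have "Epow V (?b - ?i) ?b = 0" using h E0
            by (intro Epow_zero_at) auto
          with h show False by simp
        qed
      qed
    next
      case False
      hence trm: "tr (nat \<bar>g\<bar> - 1) (nat \<bar>g\<bar>) m = m" using mk by (simp add: tr_def k1)
      show ?thesis using same[OF m mk False] qm trm by simp
    qed
  qed
qed

lemma sum_nz_ex: "sum f A \<noteq> (0::complex) \<Longrightarrow> \<exists>a\<in>A. f a \<noteq> 0"
  by (meson sum.neutral)

lemma braidop_sub:
  assumes dr: "mdim V \<le> r" and E0: "q < mdim V \<Longrightarrow> mE V q = 0" and vb: "valid_braid n w"
  shows "out \<in> idx (mdim V) n \<Longrightarrow> inp \<in> idx (mdim V) n \<Longrightarrow> braidop r V n w out inp \<noteq> 0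
     \<Longrightarrow> m < n \<Longrightarrow> q \<le> inp ! m \<Longrightarrow> q \<le> out ! (braid_perm w m)"
  using vb
proof (induction w arbitrary: out)
  case Nil thus ?case by (auto split: if_splits)
next
  case (Cons g w)
  have v: "valid_braid n w" and g: "g \<noteq> 0" "\<bar>g\<bar> \<le> int n - 1" using Cons.prems by (auto simp: valid_braid_Cons)
  from Cons.prems(3) obtain y where y: "y \<in> idx (mdim V) n" and
    nz: "genop r V g out y * braidop r V n w y inp \<noteq> 0"
    by (auto dest!: sum_nz_ex)
  have IH: "q \<le> y ! (braid_perm w m)" using Cons.IH[OF y Cons.prems(2) _ Cons.prems(4,5) v] nz by auto
  have pm: "braid_perm w m < n" using permutes_in_image[OF braid_perm_permutes[OF v], of m] Cons.prems(4) by simp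
  have "q \<le> out ! (tr (nat \<bar>g\<bar> - 1) (nat \<bar>g\<bar>) (braid_perm w m))"
    using nz by (intro genop_sub_step[OF dr E0 Cons.prems(1) y g _ pm IH]) auto
  thus ?case by (simp add: braid_perm_Cons)
qed

lemma Epow_cong:
  assumes "\<And>t. 0 < t \<Longrightarrow> t \<le> i \<Longrightarrow> mE V t = mE W t"
  shows "Epow V n i = Epow W n i"
  unfolding Epow_def using assms by (auto intro!: prod.cong)

lemma genop_quot_eq:
  assumes dr: "mdim V \<le> r" and qd: "mdim W = q" "q \<le> mdim V"
    and wt: "\<And>i. i < q \<Longrightarrow> mwt V i = mwt W i"
    and Eq: "\<And>i. 0 < i \<Longrightarrow> i < q \<Longrightarrow> mE V i = mE W i"
    and out: "out \<in> idx q n" and y: "y \<in> idx q n" and g: "g \<noteq> 0" "\<bar>g\<bar> \<le> int n - 1"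
  shows "genop r V g out y = genop r W g out y"
proof -
  define k where "k = nat \<bar>g\<bar> - 1"
  have k1: "nat \<bar>g\<bar> = k + 1" using g by (simp add: k_def)
  have kn: "k + 1 < n" using g k1 by linarith
  have bo: "\<And>t. t < n \<Longrightarrow> out ! t < q" and yb: "\<And>t. t < n \<Longrightarrow> y ! t < q"
    using out y by (auto simp: idx_iff)
  have cm: "cmat r V a b i j = cmat r W a b i j" if "a < q" "b < q" "i < q" "j < q" for a b i j
  proof -
    have "Epow V (a - j) i = Epow W (a - j) i" using that Eq by (intro Epow_cong) auto
    thus ?thesis unfolding cmat_def using that qd wt by auto
  qed
  have ce: "cinvE r V a b i j = cinvE r W a b i j" if "a < q" "b < q" "i < q" "j < q" for a b i j
  proof -
    have "Epow V (j - a) j = Epow W (j - a) j" using that Eq by (intro Epow_cong) auto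
    thus ?thesis unfolding cinvE_def using that qd wt by auto
  qed
  have ci: "cinv r V a b i j = cinv r W a b i j" if "a < q" "b < q" "i < q" "j < q" for a b i j
  proof -
    have "cinv r V a b i j = cinvE r V a b i j" using that qd dr by (intro cinv_eq) auto
    also have "\<dots> = cinvE r W a b i j" using ce that by blast
    also have "\<dots> = cinv r W a b i j" using that qd dr by (intro cinv_eq[symmetric]) auto
    finally show ?thesis .
  qed
  show ?thesis unfolding genop_def Let_def k_def[symmetric]
    using cm[OF bo bo yb yb] ci[OF bo bo yb yb] kn by auto
qed

lemma idx_mono: "q \<le> d \<Longrightarrow> idx q n \<subseteq> idx d n"
  unfolding idx_def by auto

lemma braidop_quot_eq:
  assumes dr: "mdim V \<le> r" and qd: "mdim W = q" "q \<le> mdim V"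
    and wt: "\<And>i. i < q \<Longrightarrow> mwt V i = mwt W i"
    and Eq: "\<And>i. 0 < i \<Longrightarrow> i < q \<Longrightarrow> mE V i = mE W i"
    and E0: "q < mdim V \<Longrightarrow> mE V q = 0" and vb: "valid_braid n w"
  shows "out \<in> idx q n \<Longrightarrow> inp \<in> idx q n \<Longrightarrow> braidop r V n w out inp = braidop r W n w out inp"
  using vb
proof (induction w arbitrary: out)
  case Nil thus ?case by simp
next
  case (Cons g w)
  have v: "valid_braid n w" and g: "g \<noteq> 0" "\<bar>g\<bar> \<le> int n - 1" using Cons.prems by (auto simp: valid_braid_Cons)
  have sub: "idx q n \<subseteq> idx (mdim V) n" using qd by (simp add: idx_mono)
  have outV: "out \<in> idx (mdim V) n" using Cons.prems(1) sub by auto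
  have zero: "genop r V g out y * braidop r V n w y inp = 0" if y: "y \<in> idx (mdim V) n - idx q n" for y
  proof (rule ccontr)
    assume nz: "genop r V g out y * braidop r V n w y inp \<noteq> 0"
    from y obtain m where m: "m < n" "q \<le> y ! m" by (auto simp: idx_iff not_less)
    have "q \<le> out ! (tr (nat \<bar>g\<bar> - 1) (nat \<bar>g\<bar>) m)"
      using nz y by (intro genop_sub_step[OF dr E0 outV _ g _ m]) auto
    moreover have "tr (nat \<bar>g\<bar> - 1) (nat \<bar>g\<bar>) m < n"
    proof -
      have "nat \<bar>g\<bar> < n" using g by (subst nat_less_iff) auto
      thus ?thesis using m by (auto simp: tr_def less_imp_diff_less)
    qed
    ultimately show False using Cons.prems(1) by (auto simp: idx_iff)
  qed
  have "braidop r V n (g # w) out inp = (\<Sum>y\<in>idx (mdim V) n. genop r V g out y * braidop r V n w y inp)" by simp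
  also have "\<dots> = (\<Sum>y\<in>idx q n. genop r V g out y * braidop r V n w y inp)"
    using zero sub by (intro sum.mono_neutral_right finite_idx) auto
  also have "\<dots> = (\<Sum>y\<in>idx q n. genop r W g out y * braidop r W n w y inp)"
  proof (rule sum.cong[OF refl])
    fix y assume y: "y \<in> idx q n"
    show "genop r V g out y * braidop r V n w y inp = genop r W g out y * braidop r W n w y inp"
      using genop_quot_eq[OF dr qd wt Eq Cons.prems(1) y g] Cons.IH[OF y Cons.prems(2) v] by simp
  qed
  also have "\<dots> = braidop r W n (g # w) out inp" using qd by simp
  finally show ?case .
qed

lemma orbit_closed:
  fixes p :: "nat \<Rightarrow> nat"
  assumes p: "p permutes {..<n}" and orb: "{..<n} \<subseteq> range (\<lambda>t. (p ^^ t) 0)"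
    and S: "S \<subseteq> {..<n}" and pS: "p ` S \<subseteq> S" and S0: "0 \<notin> S"
  shows "S = {}"
proof (rule ccontr)
  assume "S \<noteq> {}"
  then obtain m where mS: "m \<in> S" by auto
  have inj: "inj_on p {..<n}" using permutes_inj_on[OF p] .
  have fin: "finite S" using S finite_subset by blast
  have eq: "p ` S = S"
    using card_image[OF inj_on_subset[OF inj S]] pS fin by (intro card_subset_eq) auto
  have bk: "x \<in> S" if "x < n" "p x \<in> S" for x
  proof -
    from that(2) eq obtain s where s: "s \<in> S" "p x = p s" by auto
    have "x = s" using inj s S that(1) by (auto simp: inj_on_def)
    thus ?thesis using s by simp
  qed
  have pin: "(p ^^ t) 0 < n" if "0 < n" for t
    using permutes_in_image[OF permutes_funpow[OF p, of t], of 0] that by simp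
  have n0: "0 < n" using mS S by auto
  from mS S orb obtain t where t: "m = (p ^^ t) 0" by auto
  have "(p ^^ t) 0 \<in> S \<Longrightarrow> 0 \<in> S" for t
  proof (induction t)
    case 0 thus ?case by simp
  next
    case (Suc t)
    have "p ((p ^^ t) 0) \<in> S" using Suc.prems by simp
    hence "(p ^^ t) 0 \<in> S" using bk pin n0 by blast
    thus ?case by (rule Suc.IH)
  qed
  with mS t S0 show False by simp
qed

lemma Cons0_idx: "0 < q \<Longrightarrow> 1 \<le> n \<Longrightarrow> l \<in> idx q (n - 1) \<Longrightarrow> 0 # l \<in> idx q n"
  unfolding idx_def by auto

lemma Tval_quot:
  assumes dr: "mdim V \<le> r" and qd: "mdim W = q" "q \<le> mdim V" and q0: "0 < q"
    and wt: "\<And>i. i < q \<Longrightarrow> mwt V i = mwt W i"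
    and Eq: "\<And>i. 0 < i \<Longrightarrow> i < q \<Longrightarrow> mE V i = mE W i"
    and E0: "q < mdim V \<Longrightarrow> mE V q = 0" and kb: "knot_braid n w"
  shows "Tval r n w V = Tval r n w W"
proof -
  have vb: "valid_braid n w" and orb: "{..<n} \<subseteq> range (\<lambda>m. (braid_perm w ^^ m) 0)"
    using kb by (auto simp: knot_braid_def)
  have n1: "1 \<le> n" using vb by (simp add: valid_braid_def)
  have pp: "braid_perm w permutes {..<n}" by (rule braid_perm_permutes[OF vb])
  have sub: "idx q (n - 1) \<subseteq> idx (mdim V) (n - 1)" using qd by (simp add: idx_mono)
  have zero: "braidop r V n w (0 # l) (0 # l) = 0" if l: "l \<in> idx (mdim V) (n - 1) - idx q (n - 1)" for l
  proof (rule ccontr)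
    assume nz: "braidop r V n w (0 # l) (0 # l) \<noteq> 0"
    define x where "x = 0 # l"
    have x: "x \<in> idx (mdim V) n" unfolding x_def using l n1 q0 qd by (intro Cons0_idx) auto
    define S where "S = {m. m < n \<and> q \<le> x ! m}"
    have "S = {}"
    proof (rule orbit_closed[OF pp orb])
      show "S \<subseteq> {..<n}" by (auto simp: S_def)
      show "braid_perm w ` S \<subseteq> S"
      proof
        fix m' assume "m' \<in> braid_perm w ` S"
        then obtain m where m: "m \<in> S" "m' = braid_perm w m" by auto
        have "q \<le> x ! (braid_perm w m)"
          using m nz x by (intro braidop_sub[OF dr E0 vb]) (auto simp: S_def x_def)
        moreover have "braid_perm w m < n" using permutes_in_image[OF pp, of m] m by (simp add: S_def)
        ultimately show "m' \<in> S" using m by (simp add: S_def)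
      qed
      show "0 \<notin> S" using q0 by (simp add: S_def x_def)
    qed
    moreover from l obtain m where "m < n - 1" "q \<le> l ! m" by (auto simp: idx_iff not_less)
    hence "Suc m \<in> S" by (simp add: S_def x_def)
    ultimately show False by simp
  qed
  have "Tval r n w V = (\<Sum>l\<in>idx (mdim V) (n - 1). braidop r V n w (0 # l) (0 # l) *
      (\<Prod>m<n - 1. xi r ((1 - of_nat r) * mwt V (l ! m))))" by (simp add: Tval_def)
  also have "\<dots> = (\<Sum>l\<in>idx q (n - 1). braidop r V n w (0 # l) (0 # l) *
      (\<Prod>m<n - 1. xi r ((1 - of_nat r) * mwt V (l ! m))))"
    using zero sub by (intro sum.mono_neutral_right finite_idx) auto
  also have "\<dots> = (\<Sum>l\<in>idx q (n - 1). braidop r W n w (0 # l) (0 # l) *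
      (\<Prod>m<n - 1. xi r ((1 - of_nat r) * mwt W (l ! m))))"
  proof (rule sum.cong[OF refl])
    fix l assume l: "l \<in> idx q (n - 1)"
    have x: "0 # l \<in> idx q n" using l n1 q0 by (intro Cons0_idx) auto
    have "braidop r V n w (0 # l) (0 # l) = braidop r W n w (0 # l) (0 # l)"
      by (rule braidop_quot_eq[OF dr qd wt Eq E0 vb x x])
    moreover have "(\<Prod>m<n - 1. xi r ((1 - of_nat r) * mwt V (l ! m))) = (\<Prod>m<n - 1. xi r ((1 - of_nat r) * mwt W (l ! m)))"
      using l wt by (intro prod.cong) (auto simp: idx_iff)
    ultimately show "braidop r V n w (0 # l) (0 # l) * (\<Prod>m<n - 1. xi r ((1 - of_nat r) * mwt V (l ! m)))
      = braidop r W n w (0 # l) (0 # l) * (\<Prod>m<n - 1. xi r ((1 - of_nat r) * mwt W (l ! m)))" by simp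
  qed
  also have "\<dots> = Tval r n w W" using qd by (simp add: Tval_def)
  finally show ?thesis .
qed

lemma braidop_scale:
  fixes \<kappa> :: "int \<Rightarrow> complex" and \<phi> :: "nat list \<Rightarrow> complex"
  assumes dm: "mdim M2 = mdim M1" and vb: "valid_braid n w"
    and gen: "\<And>g out y. g \<in> set w \<Longrightarrow> out \<in> idx (mdim M1) n \<Longrightarrow> y \<in> idx (mdim M1) n \<Longrightarrow>
        genop r M2 g out y = \<kappa> g * \<phi> out * \<phi> y * genop r M1 g out y"
    and sq: "\<And>x. \<phi> x * \<phi> x = 1"
  shows "out \<in> idx (mdim M1) n \<Longrightarrow> inp \<in> idx (mdim M1) n \<Longrightarrow>
    braidop r M2 n w out inp = prod_list (map \<kappa> w) * \<phi> out * \<phi> inp * braidop r M1 n w out inp"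
  using vb gen
proof (induction w arbitrary: out)
  case Nil
  thus ?case using sq[of out] by auto
next
  case (Cons g w)
  have v: "valid_braid n w" using Cons.prems by (auto simp: valid_braid_Cons)
  have "braidop r M2 n (g # w) out inp = (\<Sum>y\<in>idx (mdim M1) n. genop r M2 g out y * braidop r M2 n w y inp)"
    using dm by simp
  also have "\<dots> = (\<Sum>y\<in>idx (mdim M1) n. (\<kappa> g * prod_list (map \<kappa> w) * \<phi> out * \<phi> inp) *
        ((\<phi> y * \<phi> y) * (genop r M1 g out y * braidop r M1 n w y inp)))"
  proof (rule sum.cong[OF refl])
    fix y assume y: "y \<in> idx (mdim M1) n"
    have "genop r M2 g out y = \<kappa> g * \<phi> out * \<phi> y * genop r M1 g out y"
      using Cons.prems y by auto
    moreover have "braidop r M2 n w y inp = prod_list (map \<kappa> w) * \<phi> y * \<phi> inp * braidop r M1 n w y inp"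
      using Cons.IH[OF y Cons.prems(2) v] Cons.prems(4) by auto
    ultimately show "genop r M2 g out y * braidop r M2 n w y inp = (\<kappa> g * prod_list (map \<kappa> w) * \<phi> out * \<phi> inp) *
        ((\<phi> y * \<phi> y) * (genop r M1 g out y * braidop r M1 n w y inp))"
      by (simp add: algebra_simps)
  qed
  also have "\<dots> = prod_list (map \<kappa> (g # w)) * \<phi> out * \<phi> inp * braidop r M1 n (g # w) out inp"
    by (simp add: sq sum_distrib_left algebra_simps)
  finally show ?case .
qed

lemma prod_kappa:
  fixes c :: complex
  assumes "c \<noteq> 0" "\<forall>g\<in>set w. g \<noteq> 0"
  shows "prod_list (map (\<lambda>g. if g > 0 then c else inverse c) w) = c powi (writhe w)"
  using assms(2)
proof (induction w)
  case Nil thus ?case by (simp add: writhe_def)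
next
  case (Cons g w)
  have wc: "writhe (g # w) = sgn g + writhe w" by (simp add: writhe_def)
  show ?case
  proof (cases "g > 0")
    case True
    thus ?thesis using Cons assms(1) by (simp add: wc power_int_add power_int_1_right)
  next
    case False
    with Cons have "g < 0" by auto
    thus ?thesis using Cons assms(1) by (simp add: wc power_int_diff power_int_1_right field_simps)
  qed
qed

definition Wsh :: "nat \<Rightarrow> nat \<Rightarrow> wmod" where
  "Wsh r n0 = (n0 + 1, \<lambda>i. of_nat n0 - 2 * of_nat i + of_nat r,
      \<lambda>i. - (curly r (of_nat i) * curly r (of_nat n0 + 1 - of_nat i) / (curly r 1)^2))"

lemma Wsh_simps: "mdim (Wsh r n0) = n0 + 1" "mwt (Wsh r n0) i = mwt (Smod r n0) i + of_nat r"
  "mE (Wsh r n0) i = - mE (Smod r n0) i"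
  by (simp_all add: Wsh_def Smod_def mdim_def mwt_def mE_def)

lemma Smod_simps: "mdim (Smod r n0) = n0 + 1" "mwt (Smod r n0) i = of_nat n0 - 2 * of_nat i"
  "mE (Smod r n0) i = curly r (of_nat i) * curly r (of_nat n0 + 1 - of_nat i) / (curly r 1)^2"
  by (simp_all add: Smod_def mdim_def mwt_def mE_def)

lemma Epow_neg:
  assumes "\<And>i. mE M2 i = - mE M1 i"
  shows "Epow M2 m i = (-1)^m * Epow M1 m i"
proof -
  have "(\<Prod>k<m. mE M2 (i - k)) = (\<Prod>k<m. (-1) * mE M1 (i - k))" using assms by simp
  also have "\<dots> = (-1)^m * (\<Prod>k<m. mE M1 (i - k))" by (simp only: prod.distrib prod_constant card_lessThan)
  finally show ?thesis unfolding Epow_def by simp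
qed

lemma inverse_m1_pow: "inverse ((-1::complex)^k) = (-1)^k"
  by (induction k) (auto simp: field_simps)

lemma xi_r_nat: "r > 0 \<Longrightarrow> xi r (of_nat r * of_nat k) = (-1)^k"
  using xi_pow[of r "of_nat r" k] xi_r[of r] by (simp add: mult.commute)

lemma xi_shift_wt:
  assumes r: "r > 0"
  shows "xi r ((of_nat n0 - 2 * of_nat b + of_nat r) * (of_nat n0 - 2 * of_nat a + of_nat r) / 2)
     = xi r ((of_nat n0 - 2 * of_nat b) * (of_nat n0 - 2 * of_nat a) / 2)
       * ((-1)^n0 * (-1)^(a + b) * xi r (of_nat r * of_nat r / 2))"
proof -
  have e: "(of_nat n0 - 2 * of_nat b + of_nat r) * (of_nat n0 - 2 * of_nat a + of_nat r) / 2
     = (of_nat n0 - 2 * of_nat b) * (of_nat n0 - 2 * of_nat a) / 2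
       + (of_nat r * of_nat n0 + (- (of_nat r * of_nat (a + b)) + of_nat r * of_nat r / (2::complex)))"
    by (simp add: field_simps)
  have m: "xi r (- (of_nat r * of_nat (a + b))) = (-1)^(a + b)"
    using xi_r_nat[OF r, of "a + b"] by (simp add: xi_neg inverse_m1_pow)
  show ?thesis unfolding e xi_add xi_r_nat[OF r] m by (simp add: algebra_simps)
qed

definition shc :: "nat \<Rightarrow> nat \<Rightarrow> complex" where
  "shc r n0 = (-1)^n0 * xi r (of_nat r * of_nat r / 2)"

lemma shc_nz: "shc r n0 \<noteq> 0" by (simp add: shc_def)

lemma m1_pow_cancel: "j \<le> a \<Longrightarrow> (-1::complex)^(a - j) * (-1)^(a + b) = (-1)^(b + j)"
proof -
  assume "j \<le> a"
  hence "a - j + (a + b) = 2 * (a - j) + (b + j)" by simp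
  hence "(-1::complex)^(a - j) * (-1)^(a + b) = (-1)^(2 * (a - j) + (b + j))" by (simp only: power_add[symmetric])
  thus ?thesis by (simp add: power_add power_mult)
qed

lemma cmat_Wsh:
  assumes r: "r > 0"
  shows "cmat r (Wsh r n0) a b i j = shc r n0 * (-1)^(b + j) * cmat r (Smod r n0) a b i j"
proof (cases "a < n0 + 1 \<and> b < n0 + 1 \<and> i < n0 + 1 \<and> j < n0 + 1 \<and> j \<le> a \<and> i = b + (a - j) \<and> a - j < r")
  case True
  have ep: "Epow (Wsh r n0) (a - j) i = (-1)^(a - j) * Epow (Smod r n0) (a - j) i"
    by (rule Epow_neg) (simp add: Wsh_simps)
  have xw: "xi r (mwt (Wsh r n0) b * mwt (Wsh r n0) a / 2) = xi r (mwt (Smod r n0) b * mwt (Smod r n0) a / 2)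
       * ((-1)^n0 * (-1)^(a + b) * xi r (of_nat r * of_nat r / 2))"
    unfolding Wsh_simps Smod_simps by (rule xi_shift_wt[OF r])
  have c: "(-1::complex)^(a - j) * (-1)^(a + b) = (-1)^(b + j)" using True by (intro m1_pow_cancel) auto
  have L: "cmat r (Wsh r n0) a b i j = Rcoef r (a - j) * Epow (Wsh r n0) (a - j) i * xi r (mwt (Wsh r n0) b * mwt (Wsh r n0) a / 2)"
    unfolding cmat_def Wsh_simps(1) using True by auto
  have R: "cmat r (Smod r n0) a b i j = Rcoef r (a - j) * Epow (Smod r n0) (a - j) i * xi r (mwt (Smod r n0) b * mwt (Smod r n0) a / 2)"
    unfolding cmat_def Smod_simps(1) using True by auto
  show ?thesis
    unfolding L R ep xw shc_def
    using c by (simp add: algebra_simps)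
next
  case False thus ?thesis unfolding cmat_def Wsh_simps(1) Smod_simps(1) by auto
qed

lemma cinvE_Wsh:
  assumes r: "r > 0"
  shows "cinvE r (Wsh r n0) i j a b = inverse (shc r n0) * (-1)^(j + b) * cinvE r (Smod r n0) i j a b"
proof (cases "i < n0 + 1 \<and> j < n0 + 1 \<and> a < n0 + 1 \<and> b < n0 + 1 \<and> i \<le> b \<and> a \<le> j \<and> b - i = j - a")
  case True
  have ep: "Epow (Wsh r n0) (b - i) b = (-1)^(b - i) * Epow (Smod r n0) (b - i) b"
    by (rule Epow_neg) (simp add: Wsh_simps)
  have xw: "xi r (- (mwt (Wsh r n0) b * mwt (Wsh r n0) a / 2)) = xi r (- (mwt (Smod r n0) b * mwt (Smod r n0) a / 2))
       * inverse ((-1)^n0 * (-1)^(a + b) * xi r (of_nat r * of_nat r / 2))"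
    unfolding xi_neg Wsh_simps Smod_simps xi_shift_wt[OF r] by (simp add: algebra_simps)
  have jj: "j = a + (b - i)" using True by auto
  have c: "(-1::complex)^(b - i) * (-1)^(a + b) = (-1)^(j + b)"
    unfolding jj by (simp add: power_add algebra_simps)
  have c2: "(-1::complex)^(b - i) * inverse ((-1)^(a + b)) = (-1)^(j + b)"
    using c by (simp add: inverse_m1_pow)
  have L: "cinvE r (Wsh r n0) i j a b = Rbar r (b - i) * Epow (Wsh r n0) (b - i) b * xi r (- (mwt (Wsh r n0) b * mwt (Wsh r n0) a / 2))"
    unfolding cinvE_def Wsh_simps(1) using True by simp
  have R: "cinvE r (Smod r n0) i j a b = Rbar r (b - i) * Epow (Smod r n0) (b - i) b * xi r (- (mwt (Smod r n0) b * mwt (Smod r n0) a / 2))"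
    unfolding cinvE_def Smod_simps(1) using True by simp
  have iv: "inverse ((-1::complex)^n0 * (-1)^(a + b) * xi r (of_nat r * of_nat r / 2))
      = (-1)^n0 * inverse ((-1)^(a + b)) * inverse (xi r (of_nat r * of_nat r / 2))"
    by (simp add: inverse_m1_pow)
  show ?thesis
    unfolding L R ep xw shc_def iv
    using c2 by (simp add: algebra_simps inverse_m1_pow)
next
  case False thus ?thesis unfolding cinvE_def Wsh_simps(1) Smod_simps(1) by auto
qed

definition phi :: "nat list \<Rightarrow> complex" where
  "phi x = (-1)^(\<Sum>m<length x. m * x ! m)"

lemma phi_sq: "phi x * phi x = 1"
  unfolding phi_def by (simp add: power_add[symmetric] mult_2[symmetric] power_mult)

lemma sum_split2:
  fixes f :: "nat \<Rightarrow> nat"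
  assumes "k + 1 < n"
  shows "(\<Sum>m<n. f m) = f k + f (k + 1) + (\<Sum>m\<in>{..<n} - {k, k + 1}. f m)"
proof -
  have "(\<Sum>m<n. f m) = f k + (\<Sum>m\<in>{..<n} - {k}. f m)"
    using assms by (intro sum.remove) auto
  also have "(\<Sum>m\<in>{..<n} - {k}. f m) = f (k + 1) + (\<Sum>m\<in>{..<n} - {k} - {k + 1}. f m)"
    using assms by (intro sum.remove) auto
  also have "{..<n} - {k} - {k + 1} = {..<n} - {k, k + 1}" by auto
  finally show ?thesis by simp
qed

lemma phi_rel:
  assumes lo: "length out = n" and ly: "length y = n" and kn: "k + 1 < n"
    and same: "\<And>m. m < n \<Longrightarrow> m \<noteq> k \<Longrightarrow> m \<noteq> k + 1 \<Longrightarrow> out ! m = y ! m"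
    and sm: "out ! k + out ! (k + 1) = y ! k + y ! (k + 1)"
  shows "phi out * phi y = (-1)^(out ! (k + 1) + y ! (k + 1))"
proof -
  define R where "R = {..<n} - {k, k + 1}"
  have so: "(\<Sum>m<n. m * out ! m) = k * out ! k + (k + 1) * out ! (k + 1) + (\<Sum>m\<in>R. m * out ! m)"
    unfolding R_def by (rule sum_split2[OF kn])
  have sy: "(\<Sum>m<n. m * y ! m) = k * y ! k + (k + 1) * y ! (k + 1) + (\<Sum>m\<in>R. m * out ! m)"
  proof -
    have "(\<Sum>m\<in>R. m * y ! m) = (\<Sum>m\<in>R. m * out ! m)" using same by (intro sum.cong) (auto simp: R_def)
    thus ?thesis unfolding R_def using sum_split2[OF kn, of "\<lambda>m. m * y ! m"] by (simp add: R_def)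
  qed
  have "(\<Sum>m<n. m * out ! m) + (\<Sum>m<n. m * y ! m)
      = 2 * ((\<Sum>m\<in>R. m * out ! m) + k * (out ! k + out ! (k + 1))) + (out ! (k + 1) + y ! (k + 1))"
  proof -
    have "k * (out ! k + out ! (k + 1)) = k * (y ! k + y ! (k + 1))" using sm by simp
    thus ?thesis unfolding so sy by (simp add: algebra_simps)
  qed
  hence "phi out * phi y = (-1)^(2 * ((\<Sum>m\<in>R. m * out ! m) + k * (out ! k + out ! (k + 1))) + (out ! (k + 1) + y ! (k + 1)))"
    unfolding phi_def lo ly by (simp only: power_add[symmetric])
  thus ?thesis by (simp add: power_add power_mult)
qed

lemma if_mult0: "(if c then k * x else 0) = k * (if c then x else (0::complex))" by simp

lemma genop_Wsh:
  assumes r: "r > 0" and dr: "n0 + 1 \<le> r"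
    and out: "out \<in> idx (n0 + 1) n" and y: "y \<in> idx (n0 + 1) n" and g: "g \<noteq> 0" "\<bar>g\<bar> \<le> int n - 1"
  shows "genop r (Wsh r n0) g out y
     = (if g > 0 then shc r n0 else inverse (shc r n0)) * phi out * phi y * genop r (Smod r n0) g out y"
proof -
  define k where "k = nat \<bar>g\<bar> - 1"
  have k1: "nat \<bar>g\<bar> = k + 1" using g by (simp add: k_def)
  have kn: "k + 1 < n" using g k1 by linarith
  have lo: "length out = n" and ly: "length y = n" using out y by (auto simp: idx_iff)
  have bo: "\<And>t. t < n \<Longrightarrow> out ! t < n0 + 1" and yb: "\<And>t. t < n \<Longrightarrow> y ! t < n0 + 1"
    using out y by (auto simp: idx_iff)
  define \<kappa> where "\<kappa> = (if g > 0 then shc r n0 else inverse (shc r n0))"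
  define sg where "sg = (-1::complex)^(out ! (k + 1) + y ! (k + 1))"
  have ciW: "cinv r (Wsh r n0) (out ! k) (out ! (k + 1)) (y ! k) (y ! (k + 1))
      = cinvE r (Wsh r n0) (out ! k) (out ! (k + 1)) (y ! k) (y ! (k + 1))"
    using kn bo yb dr by (intro cinv_eq) (auto simp: Wsh_simps)
  have ciS: "cinv r (Smod r n0) (out ! k) (out ! (k + 1)) (y ! k) (y ! (k + 1))
      = cinvE r (Smod r n0) (out ! k) (out ! (k + 1)) (y ! k) (y ! (k + 1))"
    using kn bo yb dr by (intro cinv_eq) (auto simp: Smod_simps)
  have A: "(if g > 0 then cmat r (Wsh r n0) else cinv r (Wsh r n0)) (out ! k) (out ! (k + 1)) (y ! k) (y ! (k + 1))
      = \<kappa> * sg * (if g > 0 then cmat r (Smod r n0) else cinv r (Smod r n0)) (out ! k) (out ! (k + 1)) (y ! k) (y ! (k + 1))"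
    unfolding \<kappa>_def sg_def
    using cmat_Wsh[OF r, of n0 "out ! k" "out ! (k + 1)" "y ! k" "y ! (k + 1)"]
          cinvE_Wsh[OF r, of n0 "out ! k" "out ! (k + 1)" "y ! k" "y ! (k + 1)"] ciW ciS
    by (auto simp: algebra_simps)
  have G: "genop r (Wsh r n0) g out y = \<kappa> * sg * genop r (Smod r n0) g out y"
    unfolding genop_def Let_def k_def[symmetric] A
    by (simp only: if_mult0)
  show ?thesis
  proof (cases "genop r (Smod r n0) g out y = 0")
    case True thus ?thesis using G by (simp add: \<kappa>_def)
  next
    case False
    from genop_nzD[OF False] have
      same: "\<And>t. t < n \<Longrightarrow> t \<noteq> k \<Longrightarrow> t \<noteq> k + 1 \<Longrightarrow> out ! t = y ! t" and
      AS: "(if g > 0 then cmat r (Smod r n0) else cinv r (Smod r n0)) (out ! k) (out ! (k + 1)) (y ! k) (y ! (k + 1)) \<noteq> 0"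
      unfolding k_def[symmetric] using lo by auto
    have sm: "out ! k + out ! (k + 1) = y ! k + y ! (k + 1)"
    proof (cases "g > 0")
      case True
      with AS show ?thesis unfolding cmat_def by (auto split: if_splits)
    next
      case False
      with AS ciS show ?thesis unfolding cinvE_def by (auto split: if_splits)
    qed
    have "phi out * phi y = sg" unfolding sg_def by (rule phi_rel[OF lo ly kn same sm])
    thus ?thesis using G by (simp add: \<kappa>_def algebra_simps)
  qed
qed

lemma xi_pivot_sq: "r > 0 \<Longrightarrow> (xi r ((1 - of_nat r) * of_nat r))^2 = 1"
proof -
  assume r: "r > 0"
  have "(xi r ((1 - of_nat r) * of_nat r))^2 = xi r (2 * ((1 - of_nat r) * of_nat r))"
    by (simp add: xi_pow)
  also have "\<dots> = 1"
    using r by (subst xi_eq_1_iff) (auto intro!: exI[of _ "1 - int r"] simp: algebra_simps)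
  finally show ?thesis .
qed

lemma Tval_Wsh:
  assumes r: "r > 0" and dr: "n0 + 1 \<le> r" and vb: "valid_braid n w" and wr: "writhe w = 0" and od: "odd n"
  shows "Tval r n w (Wsh r n0) = Tval r n w (Smod r n0)"
proof -
  define \<kappa> where "\<kappa> g = (if g > 0 then shc r n0 else inverse (shc r n0))" for g :: int
  have dm: "mdim (Wsh r n0) = mdim (Smod r n0)" by (simp add: Wsh_simps Smod_simps)
  have gen: "genop r (Wsh r n0) g out y = \<kappa> g * phi out * phi y * genop r (Smod r n0) g out y"
    if "g \<in> set w" "out \<in> idx (mdim (Smod r n0)) n" "y \<in> idx (mdim (Smod r n0)) n" for g out y
  proof -
    have "g \<noteq> 0" "\<bar>g\<bar> \<le> int n - 1" using vb that(1) by (auto simp: valid_braid_def)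
    thus ?thesis using genop_Wsh[OF r dr, of out n y g] that by (simp add: Smod_simps \<kappa>_def)
  qed
  have pk: "prod_list (map \<kappa> w) = 1"
    using prod_kappa[OF shc_nz, of w r n0] vb wr by (simp add: \<kappa>_def[abs_def] valid_braid_def)
  have n1: "1 \<le> n" using vb by (simp add: valid_braid_def)
  have ev: "even (n - 1)" using od n1 by simp
  have pv: "(xi r ((1 - of_nat r) * of_nat r))^(n - 1) = 1"
  proof -
    obtain t where "n - 1 = 2 * t" using ev by blast
    thus ?thesis using xi_pivot_sq[OF r] by (simp add: power_mult)
  qed
  have "Tval r n w (Wsh r n0) = (\<Sum>l\<in>idx (n0 + 1) (n - 1). braidop r (Wsh r n0) n w (0 # l) (0 # l) *
      (\<Prod>m<n - 1. xi r ((1 - of_nat r) * mwt (Wsh r n0) (l ! m))))" by (simp add: Tval_def Wsh_simps)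
  also have "\<dots> = (\<Sum>l\<in>idx (n0 + 1) (n - 1). braidop r (Smod r n0) n w (0 # l) (0 # l) *
      (\<Prod>m<n - 1. xi r ((1 - of_nat r) * mwt (Smod r n0) (l ! m))))"
  proof (rule sum.cong[OF refl])
    fix l assume l: "l \<in> idx (n0 + 1) (n - 1)"
    have x: "0 # l \<in> idx (mdim (Smod r n0)) n" using l n1 by (intro Cons0_idx) (auto simp: Smod_simps)
    have "braidop r (Wsh r n0) n w (0 # l) (0 # l) = prod_list (map \<kappa> w) * phi (0 # l) * phi (0 # l) * braidop r (Smod r n0) n w (0 # l) (0 # l)"
      by (rule braidop_scale[OF dm vb gen phi_sq x x])
    also have "\<dots> = braidop r (Smod r n0) n w (0 # l) (0 # l)" using pk phi_sq[of "0 # l"] by (simp add: algebra_simps)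
    finally have B: "braidop r (Wsh r n0) n w (0 # l) (0 # l) = braidop r (Smod r n0) n w (0 # l) (0 # l)" .
    have "(\<Prod>m<n - 1. xi r ((1 - of_nat r) * mwt (Wsh r n0) (l ! m)))
        = (\<Prod>m<n - 1. xi r ((1 - of_nat r) * mwt (Smod r n0) (l ! m)) * xi r ((1 - of_nat r) * of_nat r))"
      by (simp add: Wsh_simps distrib_left xi_add)
    also have "\<dots> = (\<Prod>m<n - 1. xi r ((1 - of_nat r) * mwt (Smod r n0) (l ! m)))"
      using pv by (simp add: prod.distrib)
    finally show "braidop r (Wsh r n0) n w (0 # l) (0 # l) * (\<Prod>m<n - 1. xi r ((1 - of_nat r) * mwt (Wsh r n0) (l ! m)))
      = braidop r (Smod r n0) n w (0 # l) (0 # l) * (\<Prod>m<n - 1. xi r ((1 - of_nat r) * mwt (Smod r n0) (l ! m)))"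
      using B by simp
  qed
  also have "\<dots> = Tval r n w (Smod r n0)" by (simp add: Tval_def Smod_simps)
  finally show ?thesis .
qed

lemma sign_cycle_of_list: "distinct cs \<Longrightarrow> sign (cycle_of_list cs) = (-1)^(length cs - 1)"
proof (induction cs rule: cycle_of_list.induct)
  case (1 i j cs)
  have "sign (cycle_of_list (i # j # cs)) = sign (Transposition.transpose i j) * sign (cycle_of_list (j # cs))"
    by (simp add: sign_compose permutation_swap_id permutation_of_cycle)
  also have "\<dots> = - ((-1)^(length (j # cs) - 1))" using 1 by (simp add: sign_swap_id)
  also have "\<dots> = (-1)^(length (i # j # cs) - 1)" by simp
  finally show ?case .
qed auto

lemma sign_braid_perm: "valid_braid n w \<Longrightarrow> sign (braid_perm w) = (-1)^(length w)"
proof (induction w)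
  case Nil thus ?case by simp
next
  case (Cons g w)
  hence v: "valid_braid n w" and g: "g \<noteq> 0" by (auto simp: valid_braid_Cons)
  have pw: "permutation (braid_perm w)"
    using braid_perm_permutes[OF v] by (auto simp: permutation_permutes)
  have ne: "nat \<bar>g\<bar> - 1 \<noteq> nat \<bar>g\<bar>" using g by simp
  have "sign (braid_perm (g # w)) = sign (Transposition.transpose (nat \<bar>g\<bar> - 1) (nat \<bar>g\<bar>)) * sign (braid_perm w)"
    unfolding braid_perm_Cons tr_transpose by (rule sign_compose[OF permutation_swap_id pw])
  also have "\<dots> = - sign (braid_perm w)" using ne by (simp add: sign_swap_id)
  finally show ?case using Cons.IH[OF v] by simp
qed

lemma writhe_parity: "\<forall>g\<in>set w. g \<noteq> 0 \<Longrightarrow> even (writhe w) \<longleftrightarrow> even (length w)"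
proof (induction w)
  case Nil thus ?case by (simp add: writhe_def)
next
  case (Cons g w)
  have "writhe (g # w) = sgn g + writhe w" by (simp add: writhe_def)
  moreover have "sgn g = 1 \<or> sgn g = -1" using Cons.prems by (auto simp: sgn_if)
  ultimately show ?case using Cons by auto
qed

lemma knot_odd:
  assumes kb: "knot_braid n w" and wr: "writhe w = 0"
  shows "odd n"
proof -
  have vb: "valid_braid n w" and orb: "{..<n} \<subseteq> range (\<lambda>m. (braid_perm w ^^ m) 0)"
    using kb by (auto simp: knot_braid_def)
  have n1: "1 \<le> n" using vb by (simp add: valid_braid_def)
  define p where "p = braid_perm w"
  have pp: "p permutes {..<n}" unfolding p_def by (rule braid_perm_permutes[OF vb])
  have pm: "permutation p" using pp by (auto simp: permutation_permutes)
  define cs where "cs = support p 0"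
  have dcs: "distinct cs" unfolding cs_def by (rule cycle_of_permutation[OF pm])
  have scs: "set cs = range (\<lambda>i. (p ^^ i) 0)" unfolding cs_def by (rule support_set[OF pm])
  have rng: "range (\<lambda>i. (p ^^ i) 0) \<subseteq> {..<n}"
    using permutes_in_image[OF permutes_funpow[OF pp]] n1 by auto
  have scs2: "set cs = {..<n}" using scs rng orb p_def by auto
  have lcs: "length cs = n" using distinct_card[OF dcs] scs2 by simp
  have peq: "p = cycle_of_list cs"
  proof
    fix x
    show "p x = cycle_of_list cs x"
    proof (cases "x \<in> set cs")
      case True thus ?thesis unfolding cs_def by (rule cycle_restrict[OF pm])
    next
      case False
      hence "x \<notin> {..<n}" using scs2 by simp
      thus ?thesis using permutes_not_in[OF pp] id_outside_supp[OF False] by simp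
    qed
  qed
  have "sign p = (-1)^(n - 1)" using sign_cycle_of_list[OF dcs] lcs peq by simp
  moreover have "sign p = (-1)^(length w)" unfolding p_def by (rule sign_braid_perm[OF vb])
  moreover have "even (length w)" using writhe_parity[of w] vb wr by (simp add: valid_braid_def)
  ultimately have "(-1::int)^(n - 1) = 1" by simp
  hence "even (n - 1)" by (metis neg_one_odd_power one_neq_neg_one)
  thus ?thesis using n1 by simp
qed

lemma Vmod_simps: "mdim (Vmod r a) = r" "mwt (Vmod r a) i = a + of_nat r - 1 - 2 * of_nat i"
  "mE (Vmod r a) i = curly r (of_nat i) * curly r (of_nat i - a) / (curly r 1)^2"
  by (simp_all add: Vmod_def mdim_def mwt_def mE_def)

lemma curly_r: "r > 0 \<Longrightarrow> curly r (of_nat r) = 0"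
  using curly_shift[of r 0] by simp

lemma Tval_V_pos:
  fixes c :: int
  assumes r: "r \<ge> 2" and c: "0 < c" "c < int r" and kb: "knot_braid n w" and wr: "writhe w = 0"
  shows "Tval r n w (Vmod r (of_int c)) = Tval r n w (Smod r (nat c - 1))"
proof -
  define q where "q = nat c"
  have q: "0 < q" "q < r" "c = int q" using c by (auto simp: q_def)
  have W: "mdim (Wsh r (q - 1)) = q" using q by (simp add: Wsh_simps)
  have "Tval r n w (Vmod r (of_int c)) = Tval r n w (Wsh r (q - 1))"
  proof (rule Tval_quot[OF _ W])
    show "mdim (Vmod r (of_int c)) \<le> r" by (simp add: Vmod_simps)
    show "q \<le> mdim (Vmod r (of_int c))" using q by (simp add: Vmod_simps)
    show "0 < q" using q by simp
    show "mwt (Vmod r (of_int c)) i = mwt (Wsh r (q - 1)) i" if "i < q" for i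
      using q by (simp add: Vmod_simps Wsh_simps Smod_simps of_nat_diff)
    show "mE (Vmod r (of_int c)) i = mE (Wsh r (q - 1)) i" if "0 < i" "i < q" for i
    proof -
      have "curly r (of_nat i - of_int c) = - curly r (of_nat (q - 1) + 1 - of_nat i)"
        using q curly_neg[of r "of_nat i - of_nat q"] by (simp add: of_nat_diff)
      thus ?thesis by (simp add: Vmod_simps Wsh_simps Smod_simps)
    qed
    show "mE (Vmod r (of_int c)) q = 0" if "q < mdim (Vmod r (of_int c))" using q by (simp add: Vmod_simps)
    show "knot_braid n w" by (rule kb)
  qed
  also have "\<dots> = Tval r n w (Smod r (q - 1))"
    using kb wr q r knot_odd[OF kb wr] by (intro Tval_Wsh) (auto simp: knot_braid_def)
  finally show ?thesis by (simp add: q_def)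
qed

lemma Tval_V_neg:
  fixes c :: int
  assumes r: "r \<ge> 2" and c: "c < 0" "- int r < c" and kb: "knot_braid n w"
  shows "Tval r n w (Vmod r (of_int c)) = Tval r n w (Smod r (nat (c + int r) - 1))"
proof -
  define q where "q = nat (c + int r)"
  have q: "0 < q" "q < r" "c = int q - int r" using c by (auto simp: q_def)
  have W: "mdim (Smod r (q - 1)) = q" using q by (simp add: Smod_simps)
  have "Tval r n w (Vmod r (of_int c)) = Tval r n w (Smod r (q - 1))"
  proof (rule Tval_quot[OF _ W])
    show "mdim (Vmod r (of_int c)) \<le> r" by (simp add: Vmod_simps)
    show "q \<le> mdim (Vmod r (of_int c))" using q by (simp add: Vmod_simps)
    show "0 < q" using q by simp
    show "mwt (Vmod r (of_int c)) i = mwt (Smod r (q - 1)) i" if "i < q" for i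
      using q by (simp add: Vmod_simps Smod_simps of_nat_diff)
    show "mE (Vmod r (of_int c)) i = mE (Smod r (q - 1)) i" if "0 < i" "i < q" for i
    proof -
      have "curly r (of_nat i - of_int c) = - curly r (of_nat i - of_int c - of_nat r)"
        using curly_shift[of r "of_nat i - of_int c - of_nat r"] r by simp
      also have "\<dots> = curly r (of_nat q - of_nat i)"
      proof -
        have cq: "(of_int c :: complex) = of_nat q - of_nat r" using q by simp
        show ?thesis using curly_neg[of r "of_nat q - of_nat i"] unfolding cq by (simp add: algebra_simps)
      qed
      finally show ?thesis using q by (simp add: Vmod_simps Smod_simps of_nat_diff)
    qed
    show "mE (Vmod r (of_int c)) q = 0" if "q < mdim (Vmod r (of_int c))"
    proof -
      have "of_nat q - (of_int c :: complex) = of_nat r" using q by simp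
      thus ?thesis using curly_r[of r] r by (simp add: Vmod_simps)
    qed
    show "knot_braid n w" by (rule kb)
  qed
  thus ?thesis by (simp add: q_def)
qed

definition tV :: "nat \<Rightarrow> nat \<Rightarrow> int list \<Rightarrow> int \<Rightarrow> complex" where
  "tV r n w c = (curly r (of_int c))^2 / (curly r 1)^2 * Tval r n w (Vmod r (of_int c))"

definition GS :: "nat \<Rightarrow> nat \<Rightarrow> int list \<Rightarrow> nat \<Rightarrow> complex" where
  "GS r n w j = (curly r (of_nat j + 1))^2 / (curly r 1)^2 * Tval r n w (Smod r j)"

lemma tV_pos:
  assumes r: "r \<ge> 2" and c: "0 < c" "c < int r" and kb: "knot_braid n w" and wr: "writhe w = 0"
  shows "tV r n w c = GS r n w (nat c - 1)"
proof -
  have e: "(of_nat (nat c - 1) + 1 :: complex) = of_int c" using c by (simp add: of_nat_diff)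
  show ?thesis unfolding tV_def GS_def e Tval_V_pos[OF r c kb wr] ..
qed

lemma tV_neg:
  assumes r: "r \<ge> 2" and c: "c < 0" "- int r < c" and kb: "knot_braid n w"
  shows "tV r n w c = GS r n w (nat (c + int r) - 1)"
proof -
  have e: "(of_nat (nat (c + int r) - 1) + 1 :: complex) = of_int c + of_nat r" using c by (simp add: of_nat_diff)
  have cs: "(curly r (of_int c + of_nat r))^2 = (curly r (of_int c))^2"
    using curly_shift[of r "of_int c"] r by simp
  show ?thesis unfolding tV_def GS_def e Tval_V_neg[OF r c kb] cs ..
qed

lemma tV_0: "tV r n w 0 = 0" by (simp add: tV_def)
lemma tV_r: "r \<ge> 2 \<Longrightarrow> tV r n w (int r) = 0" by (simp add: tV_def curly_r)

lemma sum_lessThan_add: fixes b :: nat shows "(\<Sum>m<a + b. f m) = (\<Sum>m<a. f m) + (\<Sum>m<b. f (a + m))"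
  by (induction b) (simp_all add: algebra_simps)

lemma sum_Hr: "(\<Sum>k\<in>Hr r. f k) = (\<Sum>m<r. f (2 * int m - (int r - 1)))"
proof -
  have "inj_on (\<lambda>m. 2 * int m - (int r - 1)) {..<r}" by (auto simp: inj_on_def)
  thus ?thesis unfolding Hr_def by (simp add: sum.reindex)
qed

lemma sum_pairs: fixes s :: nat shows "(\<Sum>j<2 * s. f j) = (\<Sum>m<s. f (2 * m) + f (2 * m + 1))"
  by (induction s) (simp_all add: algebra_simps)

lemma F0_odd:
  assumes r: "r = 2 * s + 1" "r \<ge> 2" and kb: "knot_braid n w" and wr: "writhe w = 0"
  shows "(\<Sum>m<r. tV r n w (2 * int m - (int r - 1))) = (\<Sum>j\<in>{0..r-2}. GS r n w j)"
proof -
  have "(\<Sum>m<r. tV r n w (2 * int m - (int r - 1))) = (\<Sum>m<s + Suc s. tV r n w (2 * int m - 2 * int s))"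
    using r by (intro sum.cong) auto
  also have "\<dots> = (\<Sum>m<s. tV r n w (2 * int m - 2 * int s)) + (\<Sum>m<Suc s. tV r n w (2 * int (s + m) - 2 * int s))"
    by (rule sum_lessThan_add)
  also have "(\<Sum>m<Suc s. tV r n w (2 * int (s + m) - 2 * int s)) = tV r n w 0 + (\<Sum>m<s. tV r n w (2 * int m + 2))"
    unfolding sum.lessThan_Suc_shift by (simp add: algebra_simps)
  also have "(\<Sum>m<s. tV r n w (2 * int m - 2 * int s)) = (\<Sum>m<s. GS r n w (2 * m))"
  proof (rule sum.cong[OF refl])
    fix m assume "m \<in> {..<s}"
    hence m: "m < s" by simp
    have "tV r n w (2 * int m - 2 * int s) = GS r n w (nat (2 * int m - 2 * int s + int r) - 1)"
      using m r by (intro tV_neg[OF r(2) _ _ kb]) auto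
    also have "nat (2 * int m - 2 * int s + int r) - 1 = 2 * m" using m r by simp
    finally show "tV r n w (2 * int m - 2 * int s) = GS r n w (2 * m)" .
  qed
  also have "(\<Sum>m<s. tV r n w (2 * int m + 2)) = (\<Sum>m<s. GS r n w (2 * m + 1))"
  proof (rule sum.cong[OF refl])
    fix m assume "m \<in> {..<s}"
    hence m: "m < s" by simp
    have "tV r n w (2 * int m + 2) = GS r n w (nat (2 * int m + 2) - 1)"
      using m r by (intro tV_pos[OF r(2) _ _ kb wr]) auto
    also have "nat (2 * int m + 2) - 1 = 2 * m + 1" by simp
    finally show "tV r n w (2 * int m + 2) = GS r n w (2 * m + 1)" .
  qed
  also have "(\<Sum>j\<in>{0..r-2}. GS r n w j) = (\<Sum>j<2 * s. GS r n w j)"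
  proof -
    have "{0..r-2} = {..<2 * s}" using r by auto
    thus ?thesis by simp
  qed
  ultimately show ?thesis by (simp add: tV_0 sum_pairs sum.distrib)
qed

lemma F0_even:
  assumes r: "r = 2 * s" "r \<ge> 2" and kb: "knot_braid n w" and wr: "writhe w = 0"
  shows "(\<Sum>m<r. tV r n w (2 * int m - (int r - 1))) = 2 * (\<Sum>j\<in>{j\<in>{0..r-2}. j mod 2 = 0}. GS r n w j)"
proof -
  have "(\<Sum>m<r. tV r n w (2 * int m - (int r - 1))) = (\<Sum>m<s + s. tV r n w (2 * int m + 1 - 2 * int s))"
    using r by (intro sum.cong) (auto simp: algebra_simps)
  also have "\<dots> = (\<Sum>m<s. tV r n w (2 * int m + 1 - 2 * int s)) + (\<Sum>m<s. tV r n w (2 * int (s + m) + 1 - 2 * int s))"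
    by (rule sum_lessThan_add)
  also have "(\<Sum>m<s. tV r n w (2 * int m + 1 - 2 * int s)) = (\<Sum>m<s. GS r n w (2 * m))"
  proof (rule sum.cong[OF refl])
    fix m assume "m \<in> {..<s}"
    hence m: "m < s" by simp
    have "tV r n w (2 * int m + 1 - 2 * int s) = GS r n w (nat (2 * int m + 1 - 2 * int s + int r) - 1)"
      using m r by (intro tV_neg[OF r(2) _ _ kb]) auto
    also have "nat (2 * int m + 1 - 2 * int s + int r) - 1 = 2 * m" using m r by simp
    finally show "tV r n w (2 * int m + 1 - 2 * int s) = GS r n w (2 * m)" .
  qed
  also have "(\<Sum>m<s. tV r n w (2 * int (s + m) + 1 - 2 * int s)) = (\<Sum>m<s. GS r n w (2 * m))"
  proof (rule sum.cong[OF refl])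
    fix m assume "m \<in> {..<s}"
    hence m: "m < s" by simp
    have "tV r n w (2 * int (s + m) + 1 - 2 * int s) = GS r n w (nat (2 * int (s + m) + 1 - 2 * int s) - 1)"
      using m r by (intro tV_pos[OF r(2) _ _ kb wr]) auto
    also have "nat (2 * int (s + m) + 1 - 2 * int s) - 1 = 2 * m" by simp
    finally show "tV r n w (2 * int (s + m) + 1 - 2 * int s) = GS r n w (2 * m)" .
  qed
  also have "(\<Sum>j\<in>{j\<in>{0..r-2}. j mod 2 = 0}. GS r n w j) = (\<Sum>m<s. GS r n w (2 * m))"
  proof -
    have "{j\<in>{0..r-2}. j mod 2 = 0} = (\<lambda>m. 2 * m) ` {..<s}"
    proof
      show "{j\<in>{0..r-2}. j mod 2 = 0} \<subseteq> (\<lambda>m. 2 * m) ` {..<s}"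
      proof
        fix j assume j: "j \<in> {j\<in>{0..r-2}. j mod 2 = 0}"
        then obtain m where "j = 2 * m" by (auto elim!: evenE)
        thus "j \<in> (\<lambda>m. 2 * m) ` {..<s}" using j r by auto
      qed
      show "(\<lambda>m. 2 * m) ` {..<s} \<subseteq> {j\<in>{0..r-2}. j mod 2 = 0}" using r by auto
    qed
    moreover have "inj_on (\<lambda>m::nat. 2 * m) {..<s}" by (auto simp: inj_on_def)
    ultimately show ?thesis by (simp add: sum.reindex)
  qed
  ultimately show ?thesis by simp
qed

lemma F1_even:
  assumes r: "r = 2 * s" "r \<ge> 2" and kb: "knot_braid n w" and wr: "writhe w = 0"
  shows "(\<Sum>m<r. tV r n w (2 * int m - (int r - 1) + 1)) = 2 * (\<Sum>j\<in>{j\<in>{0..r-2}. j mod 2 = 1}. GS r n w j)"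
proof -
  obtain t where t: "s = Suc t" using r by (cases s) auto
  have r2: "r = 2 * t + 2" using r t by simp
  have "(\<Sum>m<r. tV r n w (2 * int m - (int r - 1) + 1)) = (\<Sum>m<t + Suc (Suc t). tV r n w (2 * int m - 2 * int t))"
    using r2 by (intro sum.cong) auto
  also have "\<dots> = (\<Sum>m<t. tV r n w (2 * int m - 2 * int t)) + (\<Sum>m<Suc (Suc t). tV r n w (2 * int (t + m) - 2 * int t))"
    by (rule sum_lessThan_add)
  also have "(\<Sum>m<Suc (Suc t). tV r n w (2 * int (t + m) - 2 * int t))
      = tV r n w 0 + (\<Sum>m<t. tV r n w (2 * int m + 2)) + tV r n w (2 * int t + 2)"
  proof -
    let ?g = "\<lambda>m. tV r n w (2 * int (t + m) - 2 * int t)"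
    have "(\<Sum>m<Suc (Suc t). ?g m) = (\<Sum>m<Suc t. ?g m) + ?g (Suc t)" by (rule sum.lessThan_Suc)
    also have "(\<Sum>m<Suc t. ?g m) = ?g 0 + (\<Sum>m<t. ?g (Suc m))" by (rule sum.lessThan_Suc_shift)
    finally show ?thesis by (simp add: algebra_simps)
  qed
  also have "tV r n w (2 * int t + 2) = 0" using tV_r[OF r(2), of n w] r2 by (simp add: algebra_simps)
  also have "(\<Sum>m<t. tV r n w (2 * int m - 2 * int t)) = (\<Sum>m<t. GS r n w (2 * m + 1))"
  proof (rule sum.cong[OF refl])
    fix m assume "m \<in> {..<t}"
    hence m: "m < t" by simp
    have "tV r n w (2 * int m - 2 * int t) = GS r n w (nat (2 * int m - 2 * int t + int r) - 1)"
      using m r2 by (intro tV_neg[OF r(2) _ _ kb]) auto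
    also have "nat (2 * int m - 2 * int t + int r) - 1 = 2 * m + 1" using m r2 by simp
    finally show "tV r n w (2 * int m - 2 * int t) = GS r n w (2 * m + 1)" .
  qed
  also have "(\<Sum>m<t. tV r n w (2 * int m + 2)) = (\<Sum>m<t. GS r n w (2 * m + 1))"
  proof (rule sum.cong[OF refl])
    fix m assume "m \<in> {..<t}"
    hence m: "m < t" by simp
    have "tV r n w (2 * int m + 2) = GS r n w (nat (2 * int m + 2) - 1)"
      using m r2 by (intro tV_pos[OF r(2) _ _ kb wr]) auto
    also have "nat (2 * int m + 2) - 1 = 2 * m + 1" by simp
    finally show "tV r n w (2 * int m + 2) = GS r n w (2 * m + 1)" .
  qed
  also have "(\<Sum>j\<in>{j\<in>{0..r-2}. j mod 2 = 1}. GS r n w j) = (\<Sum>m<t. GS r n w (2 * m + 1))"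
  proof -
    have "{j\<in>{0..r-2}. j mod 2 = 1} = (\<lambda>m. 2 * m + 1) ` {..<t}"
    proof
      show "{j\<in>{0..r-2}. j mod 2 = 1} \<subseteq> (\<lambda>m. 2 * m + 1) ` {..<t}"
      proof
        fix j assume j: "j \<in> {j\<in>{0..r-2}. j mod 2 = 1}"
        hence "odd j" by (simp add: odd_iff_mod_2_eq_one)
        then obtain m where "j = 2 * m + 1" by (rule oddE)
        thus "j \<in> (\<lambda>m. 2 * m + 1) ` {..<t}" using j r2 by auto
      qed
      show "(\<lambda>m. 2 * m + 1) ` {..<t} \<subseteq> {j\<in>{0..r-2}. j mod 2 = 1}" using r2 by auto
    qed
    moreover have "inj_on (\<lambda>m::nat. 2 * m + 1) {..<t}" by (auto simp: inj_on_def)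
    ultimately show ?thesis by (simp add: sum.reindex)
  qed
  ultimately show ?thesis by (simp add: tV_0)
qed

lemma cont_xi: "isCont (\<lambda>b. xi r (f b)) x" if "isCont f x"
  unfolding xi_def divide_inverse using that by (intro continuous_intros)

lemma cont_curly: "isCont (\<lambda>b. curly r (f b)) x" if "isCont f x"
  unfolding curly_def using that by (intro continuous_intros cont_xi)

lemma cont_mE: "isCont (\<lambda>b. mE (Vmod r b) t) x"
  unfolding Vmod_simps divide_inverse by (intro continuous_intros cont_curly)

lemma cont_mwt: "isCont (\<lambda>b. mwt (Vmod r b) t) x"
  unfolding Vmod_simps by (intro continuous_intros)

lemma cont_if_const: "(P \<Longrightarrow> isCont f x) \<Longrightarrow> isCont (\<lambda>b. if P then f b else c) x"
  by (cases P) auto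

lemma cont_Epow: "isCont (\<lambda>b. Epow (Vmod r b) m i) x"
  unfolding Epow_def by (intro cont_if_const continuous_intros cont_mE)

lemma cont_cmat: "isCont (\<lambda>b. cmat r (Vmod r b) a c i j) x"
  unfolding cmat_def Vmod_simps(1) divide_inverse
  by (intro cont_if_const continuous_intros cont_Epow cont_xi cont_mwt)

lemma cont_cinvE: "isCont (\<lambda>b. cinvE r (Vmod r b) a c i j) x"
  unfolding cinvE_def Vmod_simps(1) divide_inverse
  by (intro cont_if_const continuous_intros cont_Epow cont_xi cont_mwt)

lemma cont_genop:
  assumes out: "out \<in> idx r n" and y: "y \<in> idx r n" and g: "g \<noteq> 0" "\<bar>g\<bar> \<le> int n - 1"
  shows "isCont (\<lambda>b. genop r (Vmod r b) g out y) x"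
proof -
  define k where "k = nat \<bar>g\<bar> - 1"
  have k1: "nat \<bar>g\<bar> = k + 1" using g by (simp add: k_def)
  have kn: "k + 1 < n" using g k1 by linarith
  have bo: "\<And>t. t < n \<Longrightarrow> out ! t < r" and yb: "\<And>t. t < n \<Longrightarrow> y ! t < r"
    using out y by (auto simp: idx_iff)
  define C where "C = (\<forall>m<length out. m \<noteq> k \<and> m \<noteq> k + 1 \<longrightarrow> out ! m = y ! m)"
  have eq: "genop r (Vmod r b) g out y = (if C then (if g > 0 then cmat r (Vmod r b) (out ! k) (out ! (k + 1)) (y ! k) (y ! (k + 1))
      else cinvE r (Vmod r b) (out ! k) (out ! (k + 1)) (y ! k) (y ! (k + 1))) else 0)" for b
  proof -
    have "cinv r (Vmod r b) (out ! k) (out ! (k + 1)) (y ! k) (y ! (k + 1)) = cinvE r (Vmod r b) (out ! k) (out ! (k + 1)) (y ! k) (y ! (k + 1))"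
      using kn bo yb by (intro cinv_eq) (auto simp: Vmod_simps)
    thus ?thesis unfolding genop_def Let_def k_def[symmetric] C_def[symmetric] by simp
  qed
  show ?thesis unfolding eq
    by (intro cont_if_const) (cases "g > 0", simp_all add: cont_cmat cont_cinvE)
qed

lemma cont_braidop:
  assumes "valid_braid n w"
  shows "out \<in> idx r n \<Longrightarrow> inp \<in> idx r n \<Longrightarrow> isCont (\<lambda>b. braidop r (Vmod r b) n w out inp) x"
  using assms
proof (induction w arbitrary: out)
  case Nil thus ?case by simp
next
  case (Cons g w)
  have v: "valid_braid n w" and g: "g \<noteq> 0" "\<bar>g\<bar> \<le> int n - 1" using Cons.prems by (auto simp: valid_braid_Cons)
  show ?case unfolding braidop.simps Vmod_simps(1)
    by (intro continuous_intros cont_genop[OF Cons.prems(1) _ g] Cons.IH[OF _ Cons.prems(2) v]) auto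
qed

lemma cont_Tval:
  assumes "valid_braid n w" and r0: "0 < r"
  shows "isCont (\<lambda>b. Tval r n w (Vmod r b)) x"
proof -
  have n1: "1 \<le> n" using assms by (simp add: valid_braid_def)
  show ?thesis unfolding Tval_def Vmod_simps(1)
    by (intro continuous_intros cont_braidop[OF assms(1)] cont_xi cont_mwt) (auto intro: Cons0_idx[OF r0 n1])
qed

lemma Dconst_nz: "r \<ge> 2 \<Longrightarrow> complex_of_real (Dconst r) \<noteq> 0"
proof -
  assume r: "r \<ge> 2"
  have "sin (pi / real r) > 0" using r by (intro sin_gt_zero) (auto simp: field_simps)
  moreover have "sqrt (real r / 2) > 0" using r by simp
  ultimately have "Dconst r > 0" unfolding Dconst_def by simp
  thus ?thesis by simp
qed

lemma curly1_nz: "r \<ge> 2 \<Longrightarrow> curly r 1 \<noteq> 0"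
  using curly_nat_nz[of 1 r] by simp

lemma qnum_nz:
  assumes r: "r \<ge> 2" and a: "\<alpha> \<notin> \<int>"
  shows "qnum r (of_nat r * \<alpha>) \<noteq> 0"
proof
  assume "qnum r (of_nat r * \<alpha>) = 0"
  hence "curly r (of_nat r * \<alpha>) = 0" using curly1_nz[OF r] by (simp add: qnum_def)
  then obtain k :: int where "of_nat r * \<alpha> = of_nat r * of_int k" using curly_eq_0_iff[of r] r by auto
  hence "\<alpha> = of_int k" using r by simp
  with a show False by simp
qed

theorem mainTheorem3:
  fixes r n :: nat and w :: "int list"
  assumes "r \<ge> 2" and "\<not> 4 dvd r"
    and "knot_braid n w" and "writhe w = 0"
  shows "(odd r \<longrightarrow>
            ((\<lambda>\<alpha>. (qnum r (of_nat r * \<alpha>))^2 * CGP r n w \<alpha>) \<longlongrightarrow>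
               (complex_of_real (Dconst r))^2 * WRT r n w) (at 0 within - \<int>))
       \<and> (even r \<longrightarrow>
            ((\<lambda>\<alpha>. (qnum r (of_nat r * \<alpha>))^2 * CGP r n w \<alpha>) \<longlongrightarrow>
               2 * (complex_of_real (Dconst r))^2 * WRTspin r n w 0) (at 0 within - \<int>)
          \<and> ((\<lambda>\<alpha>. (qnum r (of_nat r * \<alpha>))^2 * CGP r n w \<alpha>) \<longlongrightarrow>
               2 * (complex_of_real (Dconst r))^2 * WRTspin r n w 1) (at 1 within - \<int>))"
proof -
  note r = assms(1) and kb = assms(3) and wr = assms(4)
  have vb: "valid_braid n w" using kb by (simp add: knot_braid_def)
  define F where "F \<alpha> = (\<Sum>k\<in>Hr r. (curly r (\<alpha> + of_int k))^2 / (curly r 1)^2 * Tval r n w (Vmod r (\<alpha> + of_int k)))" for \<alpha>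
  define G where "G \<alpha> = (qnum r (of_nat r * \<alpha>))^2 * CGP r n w \<alpha>" for \<alpha>
  have cT: "isCont (\<lambda>b. Tval r n w (Vmod r b)) x" for x using cont_Tval[OF vb] r by simp
  have cF: "isCont F x" for x
    unfolding F_def divide_inverse
  proof (intro continuous_intros cont_curly)
    fix k :: int
    show "isCont (\<lambda>b. Tval r n w (Vmod r (b + of_int k))) x"
      by (rule isCont_o2[OF _ cT]) (intro continuous_intros)
  qed
  have GF: "G \<alpha> = F \<alpha>" if "\<alpha> \<in> - \<int>" for \<alpha>
    using qnum_nz[OF r, of \<alpha>] that unfolding G_def CGP_def F_def by simp
  have lim: "(G \<longlongrightarrow> F a) (at a within - \<int>)" for a
  proof -
    have "(F \<longlongrightarrow> F a) (at a within - \<int>)"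
      using cF[of a] unfolding isCont_def by (rule tendsto_within_subset) simp
    moreover have "eventually (\<lambda>x. F x = G x) (at a within - \<int>)"
      unfolding eventually_at_filter using GF by (intro always_eventually) auto
    ultimately show ?thesis by (rule tendsto_cong[THEN iffD1, rotated])
  qed
  have F0: "F 0 = (\<Sum>m<r. tV r n w (2 * int m - (int r - 1)))"
    unfolding F_def sum_Hr[of _ r] by (simp add: tV_def)
  have F1: "F 1 = (\<Sum>m<r. tV r n w (2 * int m - (int r - 1) + 1))"
    unfolding F_def sum_Hr[of _ r] tV_def by (simp add: add.commute)
  have Dn: "complex_of_real (Dconst r) \<noteq> 0" by (rule Dconst_nz[OF r])
  have W: "(complex_of_real (Dconst r))^2 * WRT r n w = (\<Sum>j\<in>{0..r-2}. GS r n w j)"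
    unfolding WRT_def GS_def using Dn by simp
  have W0: "(complex_of_real (Dconst r))^2 * WRTspin r n w 0 = (\<Sum>j\<in>{j\<in>{0..r-2}. j mod 2 = 0}. GS r n w j)"
    unfolding WRTspin_def GS_def using Dn by simp
  have W1: "(complex_of_real (Dconst r))^2 * WRTspin r n w 1 = (\<Sum>j\<in>{j\<in>{0..r-2}. j mod 2 = 1}. GS r n w j)"
    unfolding WRTspin_def GS_def using Dn by simp
  have Geq: "(\<lambda>\<alpha>. (qnum r (of_nat r * \<alpha>))^2 * CGP r n w \<alpha>) = G" by (simp add: G_def[abs_def])
  show ?thesis unfolding Geq
  proof (intro conjI impI)
    assume "odd r"
    then obtain s where s: "r = 2 * s + 1" by (rule oddE)
    have "F 0 = (complex_of_real (Dconst r))^2 * WRT r n w"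
      unfolding F0 W by (rule F0_odd[OF s r kb wr])
    thus "(G \<longlongrightarrow> (complex_of_real (Dconst r))^2 * WRT r n w) (at 0 within - \<int>)"
      using lim[of 0] by simp
  next
    assume "even r"
    then obtain s where s: "r = 2 * s" by (rule evenE)
    have "F 0 = 2 * (complex_of_real (Dconst r))^2 * WRTspin r n w 0"
      unfolding F0 mult.assoc W0 by (rule F0_even[OF s r kb wr])
    thus "(G \<longlongrightarrow> 2 * (complex_of_real (Dconst r))^2 * WRTspin r n w 0) (at 0 within - \<int>)"
      using lim[of 0] by simp
  next
    assume "even r"
    then obtain s where s: "r = 2 * s" by (rule evenE)
    have "F 1 = 2 * (complex_of_real (Dconst r))^2 * WRTspin r n w 1"
      unfolding F1 mult.assoc W1 by (rule F1_even[OF s r kb wr])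
    thus "(G \<longlongrightarrow> 2 * (complex_of_real (Dconst r))^2 * WRTspin r n w 1) (at 1 within - \<int>)"
      using lim[of 1] by simp
  qed
qed

end
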